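(* Let $B_t$ be a Brownian motion in $\mathbb{R}^n$ and $g_t$ a martingale in $\mathbb{R}^n$, both adapted to a filtration $\mathcal{F}_t$. Suppose that $dg_t=\tilde\Gamma_t\,dB_t$ for some matrix-valued process $\tilde\Gamma_t$ satisfying $\mathrm{Tr}(\tilde\Gamma_t)\ge0$ almost surely for all $t$. Assume there exists a set $K\subset\mathbb{R}^n$ such that $g_t\in K$ for all $t$. Then for all $t>0$ and $\alpha>1$, $$\mathbb{P}\left(\min_{s\le t}\mathrm{Tr}(\tilde\Gamma_s)>\alpha\frac{\mathbf{GW}(K)}{\sqrt t}\right)<\frac1\alpha.$$
   Context: $\mathbf{GW}(K)=\mathbb{E}\sup_{x\in K}\langle x,\Gamma\rangle$ where $\Gamma\sim N(0,\mathrm{Id}_n)$. *)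

theory Defs
  imports "HOL-Probability.Probability"
begin

text \<open>Filtration (continuous time, indexed by real; only t \<ge> 0 matters) on the probability space M.\<close>
definition is_filtration :: "'a measure \<Rightarrow> (real \<Rightarrow> 'a measure) \<Rightarrow> bool" where
  "is_filtration M F \<longleftrightarrow> (\<forall>s. subalgebra M (F s)) \<and> (\<forall>s t. s \<le> t \<longrightarrow> sets (F s) \<subseteq> sets (F t))"

definition gauss_density :: "real \<Rightarrow> real^'n \<Rightarrow> ennreal" where
  "gauss_density c x = ennreal (\<Prod>i\<in>UNIV. normal_density 0 (sqrt c) (x $ i))"

definition brownian_motion :: "'a measure \<Rightarrow> (real \<Rightarrow> 'a measure) \<Rightarrow> (real \<Rightarrow> 'a \<Rightarrow> real^'n) \<Rightarrow> bool" where
  "brownian_motion M F B \<longleftrightarrow>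
     (\<forall>\<omega>\<in>space M. B 0 \<omega> = 0) \<and>
     (\<forall>\<omega>\<in>space M. continuous_on {0..} (\<lambda>t. B t \<omega>)) \<and>
     (\<forall>t\<ge>0. B t \<in> borel_measurable (F t)) \<and>
     (\<forall>s t. 0 \<le> s \<and> s < t \<longrightarrow>
        distributed M lborel (\<lambda>\<omega>. B t \<omega> - B s \<omega>) (gauss_density (t - s))) \<and>
     (\<forall>s t. 0 \<le> s \<and> s \<le> t \<longrightarrow>
        (\<forall>A\<in>sets (F s). \<forall>C\<in>sets borel.
           measure M (A \<inter> {\<omega>\<in>space M. B t \<omega> - B s \<omega> \<in> C})
             = measure M A * measure M {\<omega>\<in>space M. B t \<omega> - B s \<omega> \<in> C}))"

definition vec_martingale :: "'a measure \<Rightarrow> (real \<Rightarrow> 'a measure) \<Rightarrow> (real \<Rightarrow> 'a \<Rightarrow> real^'n) \<Rightarrow> bool" where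
  "vec_martingale M F g \<longleftrightarrow>
     (\<forall>t\<ge>0. g t \<in> borel_measurable (F t)) \<and>
     (\<forall>t\<ge>0. \<forall>i. integrable M (\<lambda>\<omega>. g t \<omega> $ i)) \<and>
     (\<forall>s t i. 0 \<le> s \<and> s \<le> t \<longrightarrow>
        (AE \<omega> in M. real_cond_exp M (F s) (\<lambda>\<omega>. g t \<omega> $ i) \<omega> = g s \<omega> $ i))"

definition simple_partition :: "(real \<Rightarrow> 'a measure) \<Rightarrow> real \<Rightarrow> nat \<Rightarrow> (nat \<Rightarrow> real) \<Rightarrow> (nat \<Rightarrow> 'a \<Rightarrow> real) \<Rightarrow> bool" where
  "simple_partition F t k p \<xi> \<longleftrightarrow> p 0 = 0 \<and> p k = t \<and> (\<forall>i<k. p i < p (Suc i)) \<and>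
     (\<forall>i<k. \<xi> i \<in> borel_measurable (F (p i)) \<and> (\<exists>C. \<forall>\<omega>. \<bar>\<xi> i \<omega>\<bar> \<le> C))"

definition simple_proc :: "nat \<Rightarrow> (nat \<Rightarrow> real) \<Rightarrow> (nat \<Rightarrow> 'a \<Rightarrow> real) \<Rightarrow> real \<Rightarrow> 'a \<Rightarrow> real" where
  "simple_proc k p \<xi> s \<omega> = (\<Sum>i<k. indicator {p i<..p (Suc i)} s * \<xi> i \<omega>)"

definition simple_int :: "(real \<Rightarrow> 'a \<Rightarrow> real) \<Rightarrow> nat \<Rightarrow> (nat \<Rightarrow> real) \<Rightarrow> (nat \<Rightarrow> 'a \<Rightarrow> real) \<Rightarrow> 'a \<Rightarrow> real" where
  "simple_int W k p \<xi> \<omega> = (\<Sum>i<k. \<xi> i \<omega> * (W (p (Suc i)) \<omega> - W (p i) \<omega>))"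

definition progressive :: "(real \<Rightarrow> 'a measure) \<Rightarrow> (real \<Rightarrow> 'a \<Rightarrow> real) \<Rightarrow> bool" where
  "progressive F H \<longleftrightarrow> (\<forall>u\<ge>0. (\<lambda>(s,\<omega>). H s \<omega>) \<in>
      borel_measurable (restrict_space borel {0..u} \<Otimes>\<^sub>M F u))"

text \<open>I is (a version of) the Ito integral of H against the scalar Brownian motion W over [0,t]:
  the L2 limit of integrals of simple predictable processes converging to H in L2(dP x ds).\<close>
definition ito_integral_is :: "'a measure \<Rightarrow> (real \<Rightarrow> 'a measure) \<Rightarrow> (real \<Rightarrow> 'a \<Rightarrow> real) \<Rightarrow> real
    \<Rightarrow> (real \<Rightarrow> 'a \<Rightarrow> real) \<Rightarrow> ('a \<Rightarrow> real) \<Rightarrow> bool" where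
  "ito_integral_is M F W t H I \<longleftrightarrow> progressive F H \<and> I \<in> borel_measurable M \<and>
     (\<exists>k p \<xi>. (\<forall>m. simple_partition F t (k m) (p m) (\<xi> m)) \<and>
        ((\<lambda>m. \<integral>\<^sup>+\<omega>. (\<integral>\<^sup>+s\<in>{0..t}. ennreal ((H s \<omega> - simple_proc (k m) (p m) (\<xi> m) s \<omega>)\<^sup>2) \<partial>lborel) \<partial>M)
           \<longlonglongrightarrow> 0) \<and>
        ((\<lambda>m. \<integral>\<^sup>+\<omega>. ennreal ((I \<omega> - simple_int W (k m) (p m) (\<xi> m) \<omega>)\<^sup>2) \<partial>M) \<longlonglongrightarrow> 0))"

text \<open>dg_t = Gamma_t dB_t, i.e. g_t - g_0 = int_0^t Gamma_s dB_s a.s., componentwise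
  (g_t)_i - (g_0)_i = sum_j int_0^t Gamma_ij dB^j.\<close>
definition ito_sde :: "'a measure \<Rightarrow> (real \<Rightarrow> 'a measure) \<Rightarrow> (real \<Rightarrow> 'a \<Rightarrow> real^'n)
    \<Rightarrow> (real \<Rightarrow> 'a \<Rightarrow> real^'n^'n) \<Rightarrow> (real \<Rightarrow> 'a \<Rightarrow> real^'n) \<Rightarrow> bool" where
  "ito_sde M F g \<Gamma> B \<longleftrightarrow> (\<forall>t\<ge>0. \<forall>i. \<exists>I :: 'n \<Rightarrow> 'a \<Rightarrow> real.
      (\<forall>j. ito_integral_is M F (\<lambda>s \<omega>. B s \<omega> $ j) t (\<lambda>s \<omega>. \<Gamma> s \<omega> $ i $ j) (I j)) \<and>
      (AE \<omega> in M. g t \<omega> $ i - g 0 \<omega> $ i = (\<Sum>j\<in>UNIV. I j \<omega>)))"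

definition std_gauss :: "(real^'n) measure" where
  "std_gauss = density lborel (gauss_density 1)"

text \<open>Gaussian width GW(K) = E sup_{x in K} <x, Gamma>, as an extended real
  (it is +infinity e.g. for unbounded K); the sup is taken in ereal.\<close>
definition GW :: "(real^'n) set \<Rightarrow> ereal" where
  "GW K = (let f = (\<lambda>\<gamma>. SUP x\<in>K. ereal (x \<bullet> \<gamma>)) in
     enn2ereal (\<integral>\<^sup>+\<gamma>. e2ennreal (f \<gamma>) \<partial>std_gauss) - enn2ereal (\<integral>\<^sup>+\<gamma>. e2ennreal (- f \<gamma>) \<partial>std_gauss))"

end

theory Submission
  imports Defs
begin

lemma filt_meas:
  assumes "is_filtration M F" "f \<in> measurable (F s) N"
  shows "f \<in> measurable M N"
  using assms measurable_from_subalg unfolding is_filtration_def by blast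

lemma filt_mono_meas:
  assumes "is_filtration M F" "s \<le> u" "f \<in> borel_measurable (F s)"
  shows "f \<in> borel_measurable (F u)"
proof -
  have "space (F s) = space (F u)" "sets (F s) \<subseteq> sets (F u)"
    using assms unfolding is_filtration_def subalgebra_def by auto
  then show ?thesis using assms(3) by (auto simp: measurable_def)
qed

lemma bm_meas:
  assumes "is_filtration M F" "brownian_motion M F B" "0 \<le> u"
  shows "B u \<in> borel_measurable M"
  using assms filt_meas unfolding brownian_motion_def by blast

lemma indep_incr:
  fixes X :: "'a \<Rightarrow> real" and h :: "real^'n \<Rightarrow> real" and B :: "real \<Rightarrow> 'a \<Rightarrow> real^'n"
  assumes P: "prob_space M" and filt: "is_filtration M F" and bm: "brownian_motion M F B"
    and su: "0 \<le> s" "s \<le> u"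
    and X: "X \<in> borel_measurable (F s)" and h: "h \<in> borel_measurable borel"
  shows "prob_space.indep_var M borel X borel (\<lambda>\<omega>. h (B u \<omega> - B s \<omega>))"
proof -
  interpret prob_space M by fact
  have sub: "subalgebra M (F s)" using filt unfolding is_filtration_def by auto
  have Bu: "B u \<in> borel_measurable M" "B s \<in> borel_measurable M"
    using bm_meas[OF filt bm] su by auto
  define D where "D = (\<lambda>\<omega>. B u \<omega> - B s \<omega>)"
  have Dm: "D \<in> borel_measurable M" unfolding D_def using Bu by measurable
  define V where "V = vimage_algebra (space M) D borel"
  have spV: "space V = space M" unfolding V_def by simp
  have setsV: "sets V = {D -` A \<inter> space M | A. A \<in> sets borel}"
    unfolding V_def by (rule sets_vimage_algebra2) simp
  have Xm: "X \<in> borel_measurable M" using measurable_from_subalg[OF sub X] .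
  have hm: "(\<lambda>\<omega>. h (D \<omega>)) \<in> borel_measurable M" using Dm h by measurable
  have ind: "indep_set (sets (F s)) (sets V)"
    unfolding indep_sets2_eq
  proof (intro conjI ballI)
    show "sets (F s) \<subseteq> events" using sub unfolding subalgebra_def by auto
    show "sets V \<subseteq> events" using Dm unfolding setsV by auto
    fix a b assume a: "a \<in> sets (F s)" and b: "b \<in> sets V"
    then obtain C where C: "C \<in> sets borel" "b = D -` C \<inter> space M" unfolding setsV by auto
    have "b = {\<omega>\<in>space M. B u \<omega> - B s \<omega> \<in> C}" using C unfolding D_def by auto
    then show "prob (a \<inter> b) = prob a * prob b"
      using bm su a C unfolding brownian_motion_def by auto
  qed
  have s1: "sigma_sets (space M) {X -` A \<inter> space M | A. A \<in> sets borel} \<subseteq> sets (F s)"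
  proof -
    have "sigma_sets (space (F s)) {X -` A \<inter> space M | A. A \<in> sets borel} \<subseteq> sets (F s)"
      apply (rule sets.sigma_sets_subset)
      using X sub unfolding subalgebra_def by (auto simp: measurable_def)
    then show ?thesis using sub unfolding subalgebra_def by simp
  qed
  have s2: "sigma_sets (space M) {(\<lambda>\<omega>. h (D \<omega>)) -` A \<inter> space M | A. A \<in> sets borel} \<subseteq> sets V"
  proof -
    have "sigma_sets (space V) {(\<lambda>\<omega>. h (D \<omega>)) -` A \<inter> space M | A. A \<in> sets borel} \<subseteq> sets V"
    proof (rule sets.sigma_sets_subset, safe)
      fix A :: "real set" assume A: "A \<in> sets borel"
      have "(\<lambda>\<omega>. h (D \<omega>)) -` A \<inter> space M = D -` (h -` A) \<inter> space M" by auto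
      moreover have "h -` A \<in> sets borel" using h A by (simp add: measurable_sets_borel)
      ultimately show "(\<lambda>\<omega>. h (D \<omega>)) -` A \<inter> space M \<in> sets V" unfolding setsV by blast
    qed
    then show ?thesis using spV by simp
  qed
  have "indep_set (sigma_sets (space M) {X -` A \<inter> space M | A. A \<in> sets borel})
      (sigma_sets (space M) {(\<lambda>\<omega>. h (D \<omega>)) -` A \<inter> space M | A. A \<in> sets borel})"
    using ind s1 s2 unfolding indep_set_def
    by (intro indep_sets_mono_sets[OF ind[unfolded indep_set_def]]) (auto split: bool.split)
  then show ?thesis unfolding indep_var_eq D_def using Xm hm unfolding D_def by auto
qed

lemma lborel_prod_Basis:
  fixes F :: "'a::euclidean_space \<Rightarrow> real \<Rightarrow> real"
  assumes int: "\<And>b. b\<in>Basis \<Longrightarrow> integrable lborel (F b)"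
  shows "integrable lborel (\<lambda>x::'a. \<Prod>b\<in>Basis. F b (x\<bullet>b))"
    and "(\<integral>x. (\<Prod>b\<in>Basis. F b (x\<bullet>b)) \<partial>(lborel::'a measure)) = (\<Prod>b\<in>Basis. \<integral>z. F b z \<partial>lborel)"
proof -
  interpret product_sigma_finite "\<lambda>_::'a. lborel::real measure"
    by (simp add: product_sigma_finite_def lborel.sigma_finite_measure_axioms)
  define T where "T = (\<lambda>g. \<Sum>b\<in>(Basis::'a set). g b *\<^sub>R b)"
  have lb: "(lborel::'a measure) = distr (\<Pi>\<^sub>M b\<in>Basis. lborel) borel T"
    unfolding T_def by (rule lborel_eq)
  have Tm: "T \<in> measurable (\<Pi>\<^sub>M b\<in>Basis. lborel) borel" unfolding T_def by measurable
  have Fm[measurable]: "\<And>b. b\<in>Basis \<Longrightarrow> F b \<in> borel_measurable borel"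
    using int borel_measurable_integrable measurable_lborel1 by (metis measurable_cong_sets sets_lborel)
  have fm: "(\<lambda>x::'a. \<Prod>b\<in>Basis. F b (x\<bullet>b)) \<in> borel_measurable borel"
    by measurable
  have eq: "\<And>g. (\<Prod>b\<in>Basis. F b (T g \<bullet> b)) = (\<Prod>b\<in>Basis. F b (g b))"
    unfolding T_def by (intro prod.cong refl) (simp add: inner_sum_left inner_Basis if_distrib sum.delta cong: if_cong)
  have "integrable (\<Pi>\<^sub>M b\<in>Basis. lborel) (\<lambda>g. \<Prod>b\<in>Basis. F b (g b))"
    by (rule product_integrable_prod) (auto intro: int)
  then show "integrable lborel (\<lambda>x::'a. \<Prod>b\<in>Basis. F b (x\<bullet>b))"
    unfolding lb integrable_distr_eq[OF Tm fm] eq .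
  have "(\<integral>x. (\<Prod>b\<in>Basis. F b (x\<bullet>b)) \<partial>(lborel::'a measure)) =
     (\<integral>g. (\<Prod>b\<in>Basis. F b (T g \<bullet> b)) \<partial>(\<Pi>\<^sub>M b\<in>Basis. lborel))"
    unfolding lb by (rule integral_distr[OF Tm fm])
  also have "\<dots> = (\<Prod>b\<in>Basis. \<integral>z. F b z \<partial>lborel)"
    unfolding eq by (rule product_integral_prod) (auto intro: int)
  finally show "(\<integral>x. (\<Prod>b\<in>Basis. F b (x\<bullet>b)) \<partial>(lborel::'a measure)) = (\<Prod>b\<in>Basis. \<integral>z. F b z \<partial>lborel)" .
qed

lemma Basis_cart_range: "(Basis :: (real^'n) set) = range (\<lambda>i. axis i 1)"
  by (auto simp: Basis_vec_def)

lemma prod_cart_Basis: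
  fixes f :: "'n::finite \<Rightarrow> real \<Rightarrow> real" and x :: "real^'n"
  shows "(\<Prod>i\<in>UNIV. f i (x$i)) = (\<Prod>b\<in>Basis. f (SOME i. b = axis i 1) (x \<bullet> b))"
proof -
  have inj: "inj (\<lambda>i::'n. axis i (1::real))" by (auto simp: inj_def axis_eq_axis)
  have "(\<Prod>b\<in>Basis. f (SOME i. b = axis i 1) (x \<bullet> b)) =
      (\<Prod>i\<in>UNIV. f (SOME j. axis i (1::real) = axis j 1) (x \<bullet> axis i 1))"
    unfolding Basis_cart_range by (subst prod.reindex[OF inj]) simp
  also have "\<dots> = (\<Prod>i\<in>UNIV. f i (x$i))"
    by (intro prod.cong refl) (simp add: axis_eq_axis inner_axis)
  finally show ?thesis by simp
qed

lemma cart_prod_integral: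
  fixes f :: "'n::finite \<Rightarrow> real \<Rightarrow> real"
  assumes int: "\<And>i. integrable lborel (f i)"
  shows "integrable lborel (\<lambda>x::real^'n. \<Prod>i\<in>UNIV. f i (x$i))"
    and "(\<integral>x. (\<Prod>i\<in>UNIV. f i (x$i)) \<partial>(lborel::(real^'n) measure)) = (\<Prod>i\<in>UNIV. \<integral>z. f i z \<partial>lborel)"
proof -
  define F where "F = (\<lambda>b::real^'n. f (SOME i. b = axis i 1))"
  have intF: "\<And>b. b\<in>Basis \<Longrightarrow> integrable lborel (F b)" unfolding F_def using int by simp
  show "integrable lborel (\<lambda>x::real^'n. \<Prod>i\<in>UNIV. f i (x$i))"
    unfolding prod_cart_Basis using lborel_prod_Basis(1)[OF intF] unfolding F_def .
  have "(\<integral>x. (\<Prod>i\<in>UNIV. f i (x$i)) \<partial>(lborel::(real^'n) measure)) = (\<Prod>b\<in>Basis. \<integral>z. F b z \<partial>lborel)"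
    unfolding prod_cart_Basis using lborel_prod_Basis(2)[OF intF] unfolding F_def .
  also have "\<dots> = (\<Prod>i\<in>UNIV. \<integral>z. f i z \<partial>lborel)"
    using prod_cart_Basis[of "\<lambda>i _. \<integral>z. f i z \<partial>lborel" 0] unfolding F_def by simp
  finally show "(\<integral>x. (\<Prod>i\<in>UNIV. f i (x$i)) \<partial>(lborel::(real^'n) measure)) = (\<Prod>i\<in>UNIV. \<integral>z. f i z \<partial>lborel)" .
qed

definition gdr :: "real \<Rightarrow> real^'n \<Rightarrow> real" where
  "gdr c x = (\<Prod>i\<in>UNIV. normal_density 0 (sqrt c) (x $ i))"

lemma gauss_density_gdr: "gauss_density c = (\<lambda>x. ennreal (gdr c x))"
  by (simp add: gauss_density_def gdr_def fun_eq_iff)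

lemma gdr_nonneg: "0 \<le> gdr c x"
  by (simp add: gdr_def prod_nonneg)

lemma gdr_meas[measurable]: "gdr c \<in> borel_measurable borel"
  unfolding gdr_def by measurable

lemma normal_1d:
  assumes c: "c > 0"
  shows "integrable lborel (\<lambda>z. normal_density 0 (sqrt c) z * z)"
    "(\<integral>z. normal_density 0 (sqrt c) z * z \<partial>lborel) = 0"
    "integrable lborel (\<lambda>z. normal_density 0 (sqrt c) z * (z * z))"
    "(\<integral>z. normal_density 0 (sqrt c) z * (z * z) \<partial>lborel) = c"
    "integrable lborel (\<lambda>z. normal_density 0 (sqrt c) z)"
    "(\<integral>z. normal_density 0 (sqrt c) z \<partial>lborel) = 1"
proof -
  have s: "0 < sqrt c" using c by simp
  show "integrable lborel (\<lambda>z. normal_density 0 (sqrt c) z * z)"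
    using integrable_normal_moment_nz_1[OF s] .
  show "(\<integral>z. normal_density 0 (sqrt c) z * z \<partial>lborel) = 0"
    using integral_normal_moment_nz_1[OF s] .
  show "integrable lborel (\<lambda>z. normal_density 0 (sqrt c) z * (z * z))"
    using integrable_normal_moment[OF s, of 0 2] by (simp add: power2_eq_square)
  show "(\<integral>z. normal_density 0 (sqrt c) z * (z * z) \<partial>lborel) = c"
    using integral_normal_moment_even[OF s, of 0 1] c by (simp add: power2_eq_square)
  show "integrable lborel (\<lambda>z. normal_density 0 (sqrt c) z)"
    using integrable_normal_density[OF s] .
  show "(\<integral>z. normal_density 0 (sqrt c) z \<partial>lborel) = 1"
    using integral_normal_density[OF s] .
qed

lemma gauss_moments:
  fixes X :: "'a \<Rightarrow> real^'n"
  assumes D: "distributed M lborel X (gauss_density c)" and c: "c > 0"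
  shows "integrable M (\<lambda>\<omega>. X \<omega> $ i)" "(\<integral>\<omega>. X \<omega> $ i \<partial>M) = 0"
    "integrable M (\<lambda>\<omega>. X \<omega> $ i * X \<omega> $ j)"
    "(\<integral>\<omega>. X \<omega> $ i * X \<omega> $ j \<partial>M) = (if i = j then c else 0)"
proof -
  have D': "distributed M lborel X (\<lambda>x. ennreal (gdr c x))" using D by (simp add: gauss_density_gdr)
  note N = normal_1d[OF c]
  define N where "N = normal_density 0 (sqrt c)"
  define w1 where "w1 = (\<lambda>k z. N z * (if k = i then z else 1))"
  have e1: "\<And>x::real^'n. gdr c x * x $ i = (\<Prod>k\<in>UNIV. w1 k (x $ k))"
  proof -
    fix x :: "real^'n"
    have "(\<Prod>k\<in>UNIV. w1 k (x $ k)) = (\<Prod>k\<in>UNIV. N (x$k)) * (\<Prod>k\<in>UNIV. if k = i then x$k else 1)"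
      unfolding w1_def by (rule prod.distrib)
    then show "gdr c x * x $ i = (\<Prod>k\<in>UNIV. w1 k (x $ k))" by (simp add: gdr_def N_def prod.delta)
  qed
  have i1: "\<And>k. integrable lborel (w1 k)" unfolding w1_def N_def using N by (case_tac "k = i") simp_all
  have v1: "\<And>k. (\<integral>z. w1 k z \<partial>lborel) = (if k = i then 0 else 1)"
    unfolding w1_def N_def using N by (case_tac "k = i") simp_all
  have "integrable lborel (\<lambda>x::real^'n. gdr c x * x $ i)"
    unfolding e1 by (rule cart_prod_integral(1)[OF i1])
  then show "integrable M (\<lambda>\<omega>. X \<omega> $ i)"
    using distributed_integrable[OF D', of "\<lambda>x. x $ i"] by (simp add: gdr_nonneg)
  have "(\<integral>x. gdr c x * x $ i \<partial>lborel) = 0"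
    unfolding e1 cart_prod_integral(2)[OF i1] v1 by (simp add: prod.delta)
  then show "(\<integral>\<omega>. X \<omega> $ i \<partial>M) = 0"
    using distributed_integral[OF D', of "\<lambda>x. x $ i"] by (simp add: gdr_nonneg)
  define w2 where "w2 = (\<lambda>k z. N z * ((if k = i then z else 1) * (if k = j then z else 1)))"
  have e2: "\<And>x::real^'n. gdr c x * (x $ i * x $ j) = (\<Prod>k\<in>UNIV. w2 k (x $ k))"
  proof -
    fix x :: "real^'n"
    have "(\<Prod>k\<in>UNIV. w2 k (x $ k)) = (\<Prod>k\<in>UNIV. N (x$k)) * ((\<Prod>k\<in>UNIV. if k = i then x$k else 1) * (\<Prod>k\<in>UNIV. if k = j then x$k else 1))"
      unfolding w2_def by (simp only: prod.distrib)
    then show "gdr c x * (x $ i * x $ j) = (\<Prod>k\<in>UNIV. w2 k (x $ k))" by (simp add: gdr_def N_def prod.delta)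
  qed
  have i2: "\<And>k. integrable lborel (w2 k)" unfolding w2_def N_def using N
    by (case_tac "k = i"; case_tac "k = j") simp_all
  have v2: "\<And>k. (\<integral>z. w2 k z \<partial>lborel) = (if k = i \<and> k = j then c else if k = i \<or> k = j then 0 else 1)"
    unfolding w2_def N_def using N by (case_tac "k = i"; case_tac "k = j") simp_all
  have "integrable lborel (\<lambda>x::real^'n. gdr c x * (x $ i * x $ j))"
    unfolding e2 by (rule cart_prod_integral(1)[OF i2])
  then show "integrable M (\<lambda>\<omega>. X \<omega> $ i * X \<omega> $ j)"
    using distributed_integrable[OF D', of "\<lambda>x. x $ i * x $ j"] by (simp add: gdr_nonneg)
  have "(\<integral>x. gdr c x * (x $ i * x $ j) \<partial>lborel) = (if i = j then c else 0)"
  proof (cases "i = j")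
    case True
    have "(\<Prod>k\<in>UNIV. (if k = i \<and> k = j then c else if k = i \<or> k = j then 0 else 1)) = (\<Prod>k\<in>UNIV. if k = i then c else 1)"
      using True by (intro prod.cong) auto
    then show ?thesis using True unfolding e2 cart_prod_integral(2)[OF i2] v2 by (simp add: prod.delta)
  next
    case False
    have "(\<Prod>k\<in>UNIV. (if k = i \<and> k = j then c else if k = i \<or> k = j then 0 else 1)) = 0"
      using False by (subst prod_zero_iff) auto
    then show ?thesis using False unfolding e2 cart_prod_integral(2)[OF i2] v2 by simp
  qed
  then show "(\<integral>\<omega>. X \<omega> $ i * X \<omega> $ j \<partial>M) = (if i = j then c else 0)"
    using distributed_integral[OF D', of "\<lambda>x. x $ i * x $ j"] by (simp add: gdr_nonneg)
qed

lemma borel_measurable_vec_nth[measurable (raw)]: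
  "f \<in> borel_measurable M \<Longrightarrow> (\<lambda>x. f x $ i :: real) \<in> borel_measurable M"
  using measurable_compose[OF _ borel_measurable_nth] by blast

lemma integrable_bdd_mult:
  fixes f g :: "'a \<Rightarrow> real"
  assumes "f \<in> borel_measurable M" "\<And>\<omega>. \<bar>f \<omega>\<bar> \<le> C" "integrable M g"
  shows "integrable M (\<lambda>\<omega>. f \<omega> * g \<omega>)"
proof -
  have i: "integrable M (\<lambda>\<omega>. C * g \<omega>)" using assms(3) by simp
  have m: "(\<lambda>\<omega>. f \<omega> * g \<omega>) \<in> borel_measurable M" using assms(1) borel_measurable_integrable[OF assms(3)] by measurable
  have C: "0 \<le> C" using assms(2) abs_ge_zero order_trans by blast
  have "AE \<omega> in M. norm (f \<omega> * g \<omega>) \<le> norm (C * g \<omega>)"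
    using assms(2) C by (auto simp: abs_mult intro!: mult_right_mono)
  then show ?thesis by (rule Bochner_Integration.integrable_bound[OF i m])
qed

lemma indep_prod_int:
  fixes X :: "'a \<Rightarrow> real" and h :: "real^'n \<Rightarrow> real" and B :: "real \<Rightarrow> 'a \<Rightarrow> real^'n"
  assumes P: "prob_space M" and filt: "is_filtration M F" and bm: "brownian_motion M F B"
    and su: "0 \<le> s" "s \<le> u"
    and X: "X \<in> borel_measurable (F s)" "integrable M X" and h: "h \<in> borel_measurable borel"
    and hi: "integrable M (\<lambda>\<omega>. h (B u \<omega> - B s \<omega>))"
  shows "integrable M (\<lambda>\<omega>. X \<omega> * h (B u \<omega> - B s \<omega>))"
    "(\<integral>\<omega>. X \<omega> * h (B u \<omega> - B s \<omega>) \<partial>M) = (\<integral>\<omega>. X \<omega> \<partial>M) * (\<integral>\<omega>. h (B u \<omega> - B s \<omega>) \<partial>M)"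
proof -
  interpret prob_space M by fact
  have I: "indep_var borel X borel (\<lambda>\<omega>. h (B u \<omega> - B s \<omega>))"
    using indep_incr[OF P filt bm su X(1) h] .
  show "integrable M (\<lambda>\<omega>. X \<omega> * h (B u \<omega> - B s \<omega>))"
    using indep_var_integrable[OF I X(2) hi] .
  show "(\<integral>\<omega>. X \<omega> * h (B u \<omega> - B s \<omega>) \<partial>M) = (\<integral>\<omega>. X \<omega> \<partial>M) * (\<integral>\<omega>. h (B u \<omega> - B s \<omega>) \<partial>M)"
    using indep_var_lebesgue_integral[OF I X(2) hi] .
qed

lemma incr_moments:
  fixes B :: "real \<Rightarrow> 'a \<Rightarrow> real^'n"
  assumes P: "prob_space M" and filt: "is_filtration M F" and bm: "brownian_motion M F B"
    and su: "0 \<le> s" "s \<le> u"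
  shows "integrable M (\<lambda>\<omega>. (B u \<omega> - B s \<omega>) $ i)" "(\<integral>\<omega>. (B u \<omega> - B s \<omega>) $ i \<partial>M) = 0"
    "integrable M (\<lambda>\<omega>. (B u \<omega> - B s \<omega>) $ i * (B u \<omega> - B s \<omega>) $ j)"
    "(\<integral>\<omega>. (B u \<omega> - B s \<omega>) $ i * (B u \<omega> - B s \<omega>) $ j \<partial>M) = (if i = j then u - s else 0)"
proof -
  interpret prob_space M by fact
  have "(integrable M (\<lambda>\<omega>. (B u \<omega> - B s \<omega>) $ i) \<and> (\<integral>\<omega>. (B u \<omega> - B s \<omega>) $ i \<partial>M) = 0) \<and>
    (integrable M (\<lambda>\<omega>. (B u \<omega> - B s \<omega>) $ i * (B u \<omega> - B s \<omega>) $ j) \<and>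
    (\<integral>\<omega>. (B u \<omega> - B s \<omega>) $ i * (B u \<omega> - B s \<omega>) $ j \<partial>M) = (if i = j then u - s else 0))"
  proof (cases "s = u")
    case True
    then show ?thesis by simp
  next
    case False
    then have D: "distributed M lborel (\<lambda>\<omega>. B u \<omega> - B s \<omega>) (gauss_density (u - s))"
      using bm su unfolding brownian_motion_def by auto
    have c: "u - s > 0" using False su by simp
    show ?thesis using gauss_moments[OF D c] by simp
  qed
  then show "integrable M (\<lambda>\<omega>. (B u \<omega> - B s \<omega>) $ i)" "(\<integral>\<omega>. (B u \<omega> - B s \<omega>) $ i \<partial>M) = 0"
    "integrable M (\<lambda>\<omega>. (B u \<omega> - B s \<omega>) $ i * (B u \<omega> - B s \<omega>) $ j)"
    "(\<integral>\<omega>. (B u \<omega> - B s \<omega>) $ i * (B u \<omega> - B s \<omega>) $ j \<partial>M) = (if i = j then u - s else 0)"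
    by auto
qed

lemma B_eq_incr:
  assumes bm: "brownian_motion M F B" "\<omega> \<in> space M"
  shows "B u \<omega> = B u \<omega> - B 0 \<omega>"
  using assms unfolding brownian_motion_def by simp

lemma bm_Fmeas:
  assumes filt: "is_filtration M F" and bm: "brownian_motion M F B" and "0 \<le> a" "a \<le> b"
  shows "B a \<in> borel_measurable (F b)"
  using filt_mono_meas[OF filt assms(4)] bm assms(3) unfolding brownian_motion_def by auto

lemma bdd_integrable:
  fixes f :: "'a \<Rightarrow> real"
  assumes "prob_space M" "f \<in> borel_measurable M" "\<And>\<omega>. \<bar>f \<omega>\<bar> \<le> C"
  shows "integrable M f"
proof -
  interpret prob_space M by fact
  have "integrable M (\<lambda>\<omega>. f \<omega> * 1)"
    by (rule integrable_bdd_mult[OF assms(2,3)]) simp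
  then show ?thesis by simp
qed

lemma term_cov:
  fixes B :: "real \<Rightarrow> 'a \<Rightarrow> real^'n" and \<xi> :: "'a \<Rightarrow> real"
  assumes P: "prob_space M" and filt: "is_filtration M F" and bm: "brownian_motion M F B"
    and ab: "0 \<le> a" "a \<le> b" "b \<le> t"
    and xi: "\<xi> \<in> borel_measurable (F a)" "\<And>\<omega>. \<bar>\<xi> \<omega>\<bar> \<le> C"
  shows "integrable M (\<lambda>\<omega>. \<xi> \<omega> * (B b \<omega> $ j - B a \<omega> $ j) * B t \<omega> $ i)"
    "(\<integral>\<omega>. \<xi> \<omega> * (B b \<omega> $ j - B a \<omega> $ j) * B t \<omega> $ i \<partial>M) = (if i = j then (b - a) * (\<integral>\<omega>. \<xi> \<omega> \<partial>M) else 0)"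
proof -
  interpret prob_space M by fact
  have sub: "\<And>s. subalgebra M (F s)" using filt unfolding is_filtration_def by auto
  have xiM: "\<xi> \<in> borel_measurable M" using measurable_from_subalg[OF sub xi(1)] .
  have xiI: "integrable M \<xi>" by (rule bdd_integrable[OF P xiM xi(2)])
  have B0a: "B 0 \<in> borel_measurable (F a)" using bm_Fmeas[OF filt bm, of 0 a] ab by simp
  have Baa: "B a \<in> borel_measurable (F a)" using bm_Fmeas[OF filt bm, of a a] ab by simp
  have Bab: "B a \<in> borel_measurable (F b)" using bm_Fmeas[OF filt bm, of a b] ab by simp
  have Bbb: "B b \<in> borel_measurable (F b)" using bm_Fmeas[OF filt bm, of b b] ab by simp
  have xib: "\<xi> \<in> borel_measurable (F b)" using filt_mono_meas[OF filt ab(2) xi(1)] .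
  define X1 where "X1 = (\<lambda>\<omega>. \<xi> \<omega> * (B a \<omega> - B 0 \<omega>) $ i)"
  define X3 where "X3 = (\<lambda>\<omega>. \<xi> \<omega> * (B b \<omega> - B a \<omega>) $ j)"
  have X1m: "X1 \<in> borel_measurable (F a)"
  proof -
    note [measurable] = xi(1) B0a Baa
    show ?thesis unfolding X1_def by measurable
  qed
  have X3m: "X3 \<in> borel_measurable (F b)"
  proof -
    note [measurable] = xib Bab Bbb
    show ?thesis unfolding X3_def by measurable
  qed
  have X1i: "integrable M X1" unfolding X1_def
    by (rule integrable_bdd_mult[OF xiM xi(2)]) (rule incr_moments(1)[OF P filt bm], use ab in auto)
  have X3i: "integrable M X3" unfolding X3_def
    by (rule integrable_bdd_mult[OF xiM xi(2)]) (rule incr_moments(1)[OF P filt bm], use ab in auto)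
  have hj: "(\<lambda>v::real^'n. v $ j) \<in> borel_measurable borel" by measurable
  have hi: "(\<lambda>v::real^'n. v $ i) \<in> borel_measurable borel" by measurable
  have hji: "(\<lambda>v::real^'n. v $ j * v $ i) \<in> borel_measurable borel" by measurable
  have I1: "integrable M (\<lambda>\<omega>. X1 \<omega> * (B b \<omega> - B a \<omega>) $ j)"
    "(\<integral>\<omega>. X1 \<omega> * (B b \<omega> - B a \<omega>) $ j \<partial>M) = 0"
    using indep_prod_int[OF P filt bm ab(1,2) X1m X1i hj] incr_moments[OF P filt bm ab(1,2)] by simp_all
  have I2: "integrable M (\<lambda>\<omega>. \<xi> \<omega> * ((B b \<omega> - B a \<omega>) $ j * (B b \<omega> - B a \<omega>) $ i))"
    "(\<integral>\<omega>. \<xi> \<omega> * ((B b \<omega> - B a \<omega>) $ j * (B b \<omega> - B a \<omega>) $ i) \<partial>M) = (if i = j then (b - a) * (\<integral>\<omega>. \<xi> \<omega> \<partial>M) else 0)"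
    using indep_prod_int[OF P filt bm ab(1,2) xi(1) xiI hji] incr_moments[OF P filt bm ab(1,2)] by (simp_all add: eq_commute[of j i])
  have ab2: "0 \<le> b" "b \<le> t" using ab by auto
  have I3: "integrable M (\<lambda>\<omega>. X3 \<omega> * (B t \<omega> - B b \<omega>) $ i)"
    "(\<integral>\<omega>. X3 \<omega> * (B t \<omega> - B b \<omega>) $ i \<partial>M) = 0"
    using indep_prod_int[OF P filt bm ab2 X3m X3i hi] incr_moments[OF P filt bm ab2] by simp_all
  have eq: "\<And>\<omega>. \<omega> \<in> space M \<Longrightarrow> \<xi> \<omega> * (B b \<omega> $ j - B a \<omega> $ j) * B t \<omega> $ i =
     X1 \<omega> * (B b \<omega> - B a \<omega>) $ j + \<xi> \<omega> * ((B b \<omega> - B a \<omega>) $ j * (B b \<omega> - B a \<omega>) $ i)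
     + X3 \<omega> * (B t \<omega> - B b \<omega>) $ i"
    using bm unfolding brownian_motion_def X1_def X3_def by (simp add: algebra_simps)
  show "integrable M (\<lambda>\<omega>. \<xi> \<omega> * (B b \<omega> $ j - B a \<omega> $ j) * B t \<omega> $ i)"
    by (subst Bochner_Integration.integrable_cong[OF refl eq]) (simp_all only: Bochner_Integration.integrable_add I1(1) I2(1) I3(1))
  show "(\<integral>\<omega>. \<xi> \<omega> * (B b \<omega> $ j - B a \<omega> $ j) * B t \<omega> $ i \<partial>M) = (if i = j then (b - a) * (\<integral>\<omega>. \<xi> \<omega> \<partial>M) else 0)"
  proof -
    have "(\<integral>\<omega>. \<xi> \<omega> * (B b \<omega> $ j - B a \<omega> $ j) * B t \<omega> $ i \<partial>M) =
      (\<integral>\<omega>. X1 \<omega> * (B b \<omega> - B a \<omega>) $ j + \<xi> \<omega> * ((B b \<omega> - B a \<omega>) $ j * (B b \<omega> - B a \<omega>) $ i)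
     + X3 \<omega> * (B t \<omega> - B b \<omega>) $ i \<partial>M)"
      by (rule Bochner_Integration.integral_cong[OF refl eq])
    also have "\<dots> = (\<integral>\<omega>. X1 \<omega> * (B b \<omega> - B a \<omega>) $ j \<partial>M) + (\<integral>\<omega>. \<xi> \<omega> * ((B b \<omega> - B a \<omega>) $ j * (B b \<omega> - B a \<omega>) $ i) \<partial>M)
     + (\<integral>\<omega>. X3 \<omega> * (B t \<omega> - B b \<omega>) $ i \<partial>M)"
      by (simp only: Bochner_Integration.integral_add[OF Bochner_Integration.integrable_add[OF I1(1) I2(1)] I3(1)] Bochner_Integration.integral_add[OF I1(1) I2(1)])
    also have "\<dots> = (if i = j then (b - a) * (\<integral>\<omega>. \<xi> \<omega> \<partial>M) else 0)"
      by (simp only: I1(2) I2(2) I3(2))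
    finally show ?thesis .
  qed
qed

lemma part_bounds:
  assumes sp: "simple_partition F t k p \<xi>" and l: "l \<le> k"
  shows "0 \<le> p l" "p l \<le> t"
proof -
  have inc: "\<And>l. l < k \<Longrightarrow> p l < p (Suc l)" and p0: "p 0 = 0" and pk: "p k = t"
    using sp unfolding simple_partition_def by auto
  have a: "\<And>l. l \<le> k \<Longrightarrow> p 0 \<le> p l"
  proof -
    fix l show "l \<le> k \<Longrightarrow> p 0 \<le> p l"
    proof (induction l)
      case (Suc l) then show ?case using inc[of l] by simp
    qed simp
  qed
  have b: "\<And>d l. l + d = k \<Longrightarrow> p l \<le> p k"
  proof -
    fix d show "\<And>l. l + d = k \<Longrightarrow> p l \<le> p k"
    proof (induction d)
      case (Suc d)
      then have "p (Suc l) \<le> p k" by simp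
      moreover have "p l < p (Suc l)" using inc[of l] Suc.prems by simp
      ultimately show ?case by simp
    qed simp
  qed
  show "0 \<le> p l" using a[OF l] p0 by simp
  show "p l \<le> t" using b[of l "k - l"] l pk by simp
qed

lemma simple_cov:
  fixes B :: "real \<Rightarrow> 'a \<Rightarrow> real^'n"
  assumes P: "prob_space M" and filt: "is_filtration M F" and bm: "brownian_motion M F B"
    and sp: "simple_partition F t k p \<xi>"
  shows "integrable M (\<lambda>\<omega>. simple_int (\<lambda>s \<omega>. B s \<omega> $ j) k p \<xi> \<omega> * B t \<omega> $ i)"
    "(\<integral>\<omega>. simple_int (\<lambda>s \<omega>. B s \<omega> $ j) k p \<xi> \<omega> * B t \<omega> $ i \<partial>M) =
      (if i = j then (\<Sum>l<k. (p (Suc l) - p l) * (\<integral>\<omega>. \<xi> l \<omega> \<partial>M)) else 0)"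
proof -
  have T: "\<And>l. l < k \<Longrightarrow> integrable M (\<lambda>\<omega>. \<xi> l \<omega> * (B (p (Suc l)) \<omega> $ j - B (p l) \<omega> $ j) * B t \<omega> $ i) \<and>
    (\<integral>\<omega>. \<xi> l \<omega> * (B (p (Suc l)) \<omega> $ j - B (p l) \<omega> $ j) * B t \<omega> $ i \<partial>M) =
      (if i = j then (p (Suc l) - p l) * (\<integral>\<omega>. \<xi> l \<omega> \<partial>M) else 0)"
  proof -
    fix l assume l: "l < k"
    have ab: "0 \<le> p l" "p l \<le> p (Suc l)" "p (Suc l) \<le> t"
      using part_bounds[OF sp, of l] part_bounds[OF sp, of "Suc l"] l sp
      unfolding simple_partition_def by auto
    obtain C where C: "\<And>\<omega>. \<bar>\<xi> l \<omega>\<bar> \<le> C" and xm: "\<xi> l \<in> borel_measurable (F (p l))"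
      using sp l unfolding simple_partition_def by blast
    show "?thesis l" using term_cov[OF P filt bm ab xm C, of j i] by simp
  qed
  have eq: "\<And>\<omega>. simple_int (\<lambda>s \<omega>. B s \<omega> $ j) k p \<xi> \<omega> * B t \<omega> $ i =
     (\<Sum>l<k. \<xi> l \<omega> * (B (p (Suc l)) \<omega> $ j - B (p l) \<omega> $ j) * B t \<omega> $ i)"
    unfolding simple_int_def by (simp add: sum_distrib_right)
  show "integrable M (\<lambda>\<omega>. simple_int (\<lambda>s \<omega>. B s \<omega> $ j) k p \<xi> \<omega> * B t \<omega> $ i)"
    unfolding eq using T by (intro Bochner_Integration.integrable_sum) auto
  show "(\<integral>\<omega>. simple_int (\<lambda>s \<omega>. B s \<omega> $ j) k p \<xi> \<omega> * B t \<omega> $ i \<partial>M) =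
      (if i = j then (\<Sum>l<k. (p (Suc l) - p l) * (\<integral>\<omega>. \<xi> l \<omega> \<partial>M)) else 0)"
    unfolding eq using T by (subst Bochner_Integration.integral_sum) auto
qed

lemma simple_proc_integral:
  assumes sp: "simple_partition F t k p \<xi>"
  shows "integrable lborel (\<lambda>s. indicator {0..t} s * simple_proc k p \<xi> s \<omega>)"
    "(\<integral>s. indicator {0..t} s * simple_proc k p \<xi> s \<omega> \<partial>lborel) = (\<Sum>l<k. \<xi> l \<omega> * (p (Suc l) - p l))"
proof -
  have sub: "\<And>l. l < k \<Longrightarrow> {p l<..p (Suc l)} \<subseteq> {0..t}"
  proof -
    fix l assume l: "l < k"
    have "0 \<le> p l" "p (Suc l) \<le> t" using part_bounds[OF sp, of l] part_bounds[OF sp, of "Suc l"] l by auto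
    then show "{p l<..p (Suc l)} \<subseteq> {0..t}" by auto
  qed
  have eq: "(\<lambda>s. indicator {0..t} s * simple_proc k p \<xi> s \<omega>) =
     (\<lambda>s. \<Sum>l<k. indicator {p l<..p (Suc l)} s * \<xi> l \<omega>)"
    unfolding simple_proc_def sum_distrib_left
    by (intro ext sum.cong refl) (auto simp: indicator_def dest!: sub)
  have ii: "\<And>a b. a \<le> b \<Longrightarrow> integrable lborel (indicat_real {a<..b::real})"
    by (rule integrable_real_indicator) auto
  have le: "\<And>l. l < k \<Longrightarrow> p l \<le> p (Suc l)" using sp unfolding simple_partition_def by (auto intro: less_imp_le)
  show "integrable lborel (\<lambda>s. indicator {0..t} s * simple_proc k p \<xi> s \<omega>)"
    unfolding eq using le by (intro Bochner_Integration.integrable_sum integrable_mult_left ii) auto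
  show "(\<integral>s. indicator {0..t} s * simple_proc k p \<xi> s \<omega> \<partial>lborel) = (\<Sum>l<k. \<xi> l \<omega> * (p (Suc l) - p l))"
    unfolding eq using le
    by (subst Bochner_Integration.integral_sum) (auto intro!: sum.cong integrable_mult_left ii)
qed

lemma subalg_id_meas:
  assumes "subalgebra M N" shows "(\<lambda>x. x) \<in> measurable M N"
  using assms unfolding subalgebra_def by (auto simp: measurable_def)

lemma prog_joint:
  fixes H :: "real \<Rightarrow> 'a \<Rightarrow> real"
  assumes filt: "is_filtration M F" and prog: "progressive F H" and t: "0 \<le> t"
  shows "(\<lambda>(\<omega>, s). indicator {0..t} s * H s \<omega>) \<in> borel_measurable (M \<Otimes>\<^sub>M lborel)"
proof -
  define \<Omega> where "\<Omega> = space M \<times> {0..t::real}"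
  have Hm: "(\<lambda>(s,\<omega>). H s \<omega>) \<in> borel_measurable (restrict_space borel {0..t} \<Otimes>\<^sub>M F t)"
    using prog t unfolding progressive_def by auto
  have sub: "subalgebra M (F t)" using filt unfolding is_filtration_def by auto
  have psi: "(\<lambda>(\<omega>,s). (s,\<omega>)) \<in> measurable (restrict_space (M \<Otimes>\<^sub>M lborel) \<Omega>) (restrict_space borel {0..t} \<Otimes>\<^sub>M F t)"
  proof (rule measurable_pair)
    have "snd \<in> measurable (restrict_space (M \<Otimes>\<^sub>M lborel) \<Omega>) (restrict_space borel {0..t})"
    proof (rule measurable_restrict_space2)
      show "snd \<in> space (restrict_space (M \<Otimes>\<^sub>M lborel) \<Omega>) \<rightarrow> {0..t}"
        by (auto simp: \<Omega>_def space_restrict_space space_pair_measure)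
      have "snd \<in> measurable (M \<Otimes>\<^sub>M lborel) (lborel::real measure)" by simp
      then have "snd \<in> measurable (M \<Otimes>\<^sub>M lborel) (borel::real measure)"
        by (simp add: measurable_def)
      then show "snd \<in> measurable (restrict_space (M \<Otimes>\<^sub>M lborel) \<Omega>) borel"
        by (rule measurable_restrict_space1)
    qed
    then show "fst \<circ> (\<lambda>(\<omega>,s). (s,\<omega>)) \<in> measurable (restrict_space (M \<Otimes>\<^sub>M lborel) \<Omega>) (restrict_space borel {0..t})"
      by (simp add: comp_def case_prod_beta)
    have "fst \<in> measurable (restrict_space (M \<Otimes>\<^sub>M lborel) \<Omega>) M"
      by (rule measurable_restrict_space1) simp
    then have "(\<lambda>x. fst x) \<in> measurable (restrict_space (M \<Otimes>\<^sub>M lborel) \<Omega>) (F t)"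
      using measurable_compose[OF _ subalg_id_meas[OF sub]] by blast
    then show "snd \<circ> (\<lambda>(\<omega>,s). (s,\<omega>)) \<in> measurable (restrict_space (M \<Otimes>\<^sub>M lborel) \<Omega>) (F t)"
      by (simp add: comp_def case_prod_beta)
  qed
  have c: "(\<lambda>(\<omega>,s). H s \<omega>) \<in> borel_measurable (restrict_space (M \<Otimes>\<^sub>M lborel) \<Omega>)"
    using measurable_compose[OF psi Hm] by (simp add: case_prod_beta)
  have \<Omega>s: "\<Omega> \<inter> space (M \<Otimes>\<^sub>M lborel) \<in> sets (M \<Otimes>\<^sub>M lborel)"
    unfolding \<Omega>_def by (auto simp: space_pair_measure)
  have "(\<lambda>x. if x \<in> \<Omega> then (\<lambda>(\<omega>,s). H s \<omega>) x else 0) \<in> borel_measurable (M \<Otimes>\<^sub>M lborel)"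
    using c measurable_restrict_space_iff[OF \<Omega>s, of 0 borel "\<lambda>(\<omega>,s). H s \<omega>"] by simp
  then show ?thesis
    by (rule measurable_cong[THEN iffD1, rotated])
       (auto simp: \<Omega>_def space_pair_measure indicator_def)
qed

lemma amgm: "(\<delta>::real) > 0 \<Longrightarrow> \<bar>a * b\<bar> \<le> a\<^sup>2 / \<delta> + \<delta> * b\<^sup>2"
proof -
  assume d: "\<delta> > 0"
  have "0 \<le> (\<bar>a\<bar> - \<delta> * \<bar>b\<bar>)\<^sup>2" by simp
  then have "2 * \<delta> * \<bar>a * b\<bar> \<le> a\<^sup>2 + \<delta>\<^sup>2 * b\<^sup>2"
    by (simp add: power2_eq_square algebra_simps abs_mult)
  moreover have "\<delta> * \<bar>a * b\<bar> \<le> 2 * \<delta> * \<bar>a * b\<bar>" using d by simp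
  ultimately have "\<delta> * \<bar>a * b\<bar> \<le> a\<^sup>2 + \<delta>\<^sup>2 * b\<^sup>2" by linarith
  then show ?thesis using d by (simp add: field_simps power2_eq_square)
qed

lemma abstract_lim:
  fixes x d :: "nat \<Rightarrow> real"
  assumes ev: "eventually (\<lambda>m. \<forall>\<delta>>0. \<bar>x m - x0\<bar> \<le> d m / \<delta> + \<delta> * C) sequentially"
    and d: "d \<longlonglongrightarrow> 0" and C: "0 \<le> C"
  shows "x \<longlonglongrightarrow> x0"
proof (rule tendstoI)
  fix r :: real assume r: "r > 0"
  define \<delta> where "\<delta> = r / (2 * (C + 1))"
  have \<delta>: "\<delta> > 0" unfolding \<delta>_def using r C by simp
  have dC: "\<delta> * C < r / 2" unfolding \<delta>_def using r C by (simp add: field_simps)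
  have "eventually (\<lambda>m. dist (d m) 0 < \<delta> * r / 2) sequentially"
    using tendstoD[OF d, of "\<delta> * r / 2"] \<delta> r by simp
  with ev show "eventually (\<lambda>m. dist (x m) x0 < r) sequentially"
  proof eventually_elim
    case (elim m)
    have a1: "\<bar>x m - x0\<bar> \<le> d m / \<delta> + \<delta> * C" using elim(1) \<delta> by auto
    have "\<bar>d m\<bar> < \<delta> * r / 2" using elim(2) by (simp add: dist_real_def)
    then have "d m < \<delta> * (r / 2)" by simp
    then have a2: "d m / \<delta> < r / 2" using \<delta> by (simp add: divide_less_eq mult.commute)
    have "\<bar>x m - x0\<bar> < r" using a1 a2 dC by linarith
    then show ?case by (simp add: dist_real_def)
  qed
qed

lemma L2_lim:
  fixes f z :: "'a \<Rightarrow> real" and fm :: "nat \<Rightarrow> 'a \<Rightarrow> real"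
  assumes conv: "(\<lambda>m. \<integral>\<^sup>+x. ennreal ((f x - fm m x)\<^sup>2) \<partial>N) \<longlonglongrightarrow> 0"
    and fmeas[measurable]: "f \<in> borel_measurable N" and fmm[measurable]: "\<And>m. fm m \<in> borel_measurable N"
    and zm[measurable]: "z \<in> borel_measurable N"
    and fmi: "\<And>m. integrable N (\<lambda>x. fm m x * z x)"
    and Z: "integrable N (\<lambda>x. (z x)\<^sup>2)"
  shows "integrable N (\<lambda>x. f x * z x)" "(\<lambda>m. \<integral>x. fm m x * z x \<partial>N) \<longlonglongrightarrow> (\<integral>x. f x * z x \<partial>N)"
proof -
  define D where "D = (\<lambda>m. \<integral>\<^sup>+x. ennreal ((f x - fm m x)\<^sup>2) \<partial>N)"
  have evD: "eventually (\<lambda>m. D m < 1) sequentially"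
    using order_tendstoD(2)[OF conv[folded D_def], of 1] by simp
  have sqi: "\<And>m. D m < 1 \<Longrightarrow> integrable N (\<lambda>x. (f x - fm m x)\<^sup>2)"
    by (rule integrableI_nonneg) (auto simp: D_def intro: order.strict_trans)
  have Deq: "\<And>m. D m < 1 \<Longrightarrow> D m = ennreal (\<integral>x. (f x - fm m x)\<^sup>2 \<partial>N)"
    unfolding D_def by (rule nn_integral_eq_integral[OF sqi[unfolded D_def]]) auto
  have bnd: "\<And>m \<delta>. D m < 1 \<Longrightarrow> \<delta> > 0 \<Longrightarrow> integrable N (\<lambda>x. (f x - fm m x) * z x) \<and>
      \<bar>\<integral>x. (f x - fm m x) * z x \<partial>N\<bar> \<le> (\<integral>x. (f x - fm m x)\<^sup>2 \<partial>N) / \<delta> + \<delta> * (\<integral>x. (z x)\<^sup>2 \<partial>N)"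
  proof -
    fix m :: nat and \<delta> :: real assume Dm: "D m < 1" and d: "\<delta> > 0"
    have gi: "integrable N (\<lambda>x. (f x - fm m x)\<^sup>2 / \<delta> + \<delta> * (z x)\<^sup>2)"
      using sqi[OF Dm] Z by auto
    have pi: "integrable N (\<lambda>x. (f x - fm m x) * z x)"
      by (rule Bochner_Integration.integrable_bound[OF gi]) (auto intro!: AE_I2 order_trans[OF amgm[OF d]])
    have "\<bar>\<integral>x. (f x - fm m x) * z x \<partial>N\<bar> \<le> (\<integral>x. \<bar>(f x - fm m x) * z x\<bar> \<partial>N)"
      using Bochner_Integration.integral_norm_bound[of N "\<lambda>x. (f x - fm m x) * z x"] by simp
    also have "\<dots> \<le> (\<integral>x. (f x - fm m x)\<^sup>2 / \<delta> + \<delta> * (z x)\<^sup>2 \<partial>N)"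
      by (rule integral_mono[OF _ gi]) (use pi amgm[OF d] in auto)
    also have "\<dots> = (\<integral>x. (f x - fm m x)\<^sup>2 \<partial>N) / \<delta> + \<delta> * (\<integral>x. (z x)\<^sup>2 \<partial>N)"
      using sqi[OF Dm] Z by simp
    finally show "integrable N (\<lambda>x. (f x - fm m x) * z x) \<and>
      \<bar>\<integral>x. (f x - fm m x) * z x \<partial>N\<bar> \<le> (\<integral>x. (f x - fm m x)\<^sup>2 \<partial>N) / \<delta> + \<delta> * (\<integral>x. (z x)\<^sup>2 \<partial>N)"
      using pi by simp
  qed
  obtain m0 where m0: "D m0 < 1" using evD eventually_sequentially by auto
  have eqm: "\<And>m x. f x * z x = (f x - fm m x) * z x + fm m x * z x" by (simp add: algebra_simps)
  show fi: "integrable N (\<lambda>x. f x * z x)"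
    by (subst eqm[of _ m0]) (intro Bochner_Integration.integrable_add fmi bnd[OF m0, of 1, THEN conjunct1]; simp)
  define d where "d = (\<lambda>m. enn2real (D m))"
  have d0: "d \<longlonglongrightarrow> 0" unfolding d_def using tendsto_enn2real[of D 0] conv[folded D_def] by simp
  show "(\<lambda>m. \<integral>x. fm m x * z x \<partial>N) \<longlonglongrightarrow> (\<integral>x. f x * z x \<partial>N)"
  proof (rule abstract_lim[where d=d and C="\<integral>x. (z x)\<^sup>2 \<partial>N"])
    show "d \<longlonglongrightarrow> 0" by fact
    show "0 \<le> (\<integral>x. (z x)\<^sup>2 \<partial>N)" by simp
    show "eventually (\<lambda>m. \<forall>\<delta>>0. \<bar>(\<integral>x. fm m x * z x \<partial>N) - (\<integral>x. f x * z x \<partial>N)\<bar> \<le> d m / \<delta> + \<delta> * (\<integral>x. (z x)\<^sup>2 \<partial>N)) sequentially"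
      using evD
    proof eventually_elim
      case (elim m)
      show ?case
      proof (intro allI impI)
        fix \<delta> :: real assume d: "\<delta> > 0"
        note b = bnd[OF elim d]
        have "(\<integral>x. f x * z x \<partial>N) = (\<integral>x. (f x - fm m x) * z x \<partial>N) + (\<integral>x. fm m x * z x \<partial>N)"
          by (subst eqm[of _ m]) (rule Bochner_Integration.integral_add[OF b[THEN conjunct1] fmi])
        moreover have "d m = (\<integral>x. (f x - fm m x)\<^sup>2 \<partial>N)"
          unfolding d_def Deq[OF elim] by simp
        ultimately show "\<bar>(\<integral>x. fm m x * z x \<partial>N) - (\<integral>x. f x * z x \<partial>N)\<bar> \<le> d m / \<delta> + \<delta> * (\<integral>x. (z x)\<^sup>2 \<partial>N)"
          using b by simp
      qed
    qed
  qed
qed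

lemma abs_le_sq1: "\<bar>x::real\<bar> \<le> x\<^sup>2 + 1"
proof (cases "\<bar>x\<bar> \<le> 1")
  case True then show ?thesis using zero_le_power2[of x] by linarith
next
  case False
  then have "\<bar>x\<bar> * 1 \<le> \<bar>x\<bar> * \<bar>x\<bar>" by (intro mult_left_mono) auto
  moreover have "x\<^sup>2 = \<bar>x\<bar> * \<bar>x\<bar>" by (simp add: power2_eq_square)
  ultimately show ?thesis by linarith
qed

lemma ds_lim:
  fixes H :: "real \<Rightarrow> 'a \<Rightarrow> real" and S :: "nat \<Rightarrow> real \<Rightarrow> 'a \<Rightarrow> real"
  assumes P: "prob_space M" and t: "0 \<le> t"
    and Hj: "(\<lambda>(\<omega>,s). indicator {0..t} s * H s \<omega>) \<in> borel_measurable (M \<Otimes>\<^sub>M lborel)"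
    and Sj: "\<And>m. (\<lambda>(\<omega>,s). indicator {0..t} s * S m s \<omega>) \<in> borel_measurable (M \<Otimes>\<^sub>M lborel)"
    and Sint: "\<And>m \<omega>. integrable lborel (\<lambda>s. indicator {0..t} s * S m s \<omega>)"
    and Zint: "\<And>m. integrable M (\<lambda>\<omega>. \<integral>s. indicator {0..t} s * S m s \<omega> \<partial>lborel)"
    and conv: "(\<lambda>m. \<integral>\<^sup>+\<omega>. (\<integral>\<^sup>+s\<in>{0..t}. ennreal ((H s \<omega> - S m s \<omega>)\<^sup>2) \<partial>lborel) \<partial>M) \<longlonglongrightarrow> 0"
  shows "integrable M (\<lambda>\<omega>. \<integral>s. indicator {0..t} s * H s \<omega> \<partial>lborel)"
    "(\<lambda>m. \<integral>\<omega>. (\<integral>s. indicator {0..t} s * S m s \<omega> \<partial>lborel) \<partial>M) \<longlonglongrightarrow> (\<integral>\<omega>. (\<integral>s. indicator {0..t} s * H s \<omega> \<partial>lborel) \<partial>M)"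
    "AE \<omega> in M. integrable lborel (\<lambda>s. indicator {0..t} s * H s \<omega>)"
proof -
  interpret prob_space M by fact
  define HJ where "HJ = (\<lambda>(\<omega>,s). indicator {0..t} s * H s \<omega> :: real)"
  define SJ where "SJ = (\<lambda>m (\<omega>,s). indicator {0..t} s * S m s \<omega> :: real)"
  have HJm[measurable]: "HJ \<in> borel_measurable (M \<Otimes>\<^sub>M lborel)" using Hj unfolding HJ_def .
  have SJm[measurable]: "\<And>m. SJ m \<in> borel_measurable (M \<Otimes>\<^sub>M lborel)" using Sj unfolding SJ_def by auto
  define Y where "Y = (\<lambda>\<omega>. \<integral>s. HJ (\<omega>,s) \<partial>lborel)"
  define Z where "Z = (\<lambda>m \<omega>. \<integral>s. SJ m (\<omega>,s) \<partial>lborel)"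
  define e where "e = (\<lambda>m \<omega>. \<integral>\<^sup>+s. ennreal ((HJ (\<omega>,s) - SJ m (\<omega>,s))\<^sup>2) \<partial>lborel)"
  define r where "r = (\<lambda>m \<omega>. \<integral>s. (HJ (\<omega>,s) - SJ m (\<omega>,s))\<^sup>2 \<partial>lborel)"
  define D where "D = (\<lambda>m. \<integral>\<^sup>+\<omega>. e m \<omega> \<partial>M)"
  have Ym: "Y \<in> borel_measurable M" unfolding Y_def
    by (rule lborel.borel_measurable_lebesgue_integral) simp
  have Zm: "\<And>m. Z m \<in> borel_measurable M" unfolding Z_def
    by (rule lborel.borel_measurable_lebesgue_integral) simp
  have rm: "\<And>m. r m \<in> borel_measurable M" unfolding r_def
    by (rule lborel.borel_measurable_lebesgue_integral) simp
  have em: "\<And>m. e m \<in> borel_measurable M" unfolding e_def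
    by (rule lborel.borel_measurable_nn_integral) simp
  have Heq: "\<And>\<omega> s. HJ (\<omega>,s) = indicator {0..t} s * H s \<omega>" unfolding HJ_def by simp
  have Seq: "\<And>m \<omega> s. SJ m (\<omega>,s) = indicator {0..t} s * S m s \<omega>" unfolding SJ_def by simp
  have De: "\<And>m. (\<integral>\<^sup>+\<omega>. (\<integral>\<^sup>+s\<in>{0..t}. ennreal ((H s \<omega> - S m s \<omega>)\<^sup>2) \<partial>lborel) \<partial>M) = D m"
    unfolding D_def e_def Heq Seq
    by (intro nn_integral_cong) (auto simp: indicator_def power2_eq_square)
  have conv': "D \<longlonglongrightarrow> 0" using conv unfolding De .
  have sec: "\<And>f \<omega>. f \<in> borel_measurable (M \<Otimes>\<^sub>M lborel) \<Longrightarrow> \<omega> \<in> space M \<Longrightarrow> (\<lambda>s. f (\<omega>, s)) \<in> borel_measurable lborel"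
    by simp
  have good: "\<And>m \<omega>. \<omega> \<in> space M \<Longrightarrow> e m \<omega> < \<infinity> \<Longrightarrow>
      integrable lborel (\<lambda>s. HJ (\<omega>,s) - SJ m (\<omega>,s)) \<and> integrable lborel (\<lambda>s. (HJ (\<omega>,s) - SJ m (\<omega>,s))\<^sup>2)
      \<and> e m \<omega> = ennreal (r m \<omega>)"
  proof -
    fix m \<omega> assume \<omega>: "\<omega> \<in> space M" and fin: "e m \<omega> < \<infinity>"
    have gm: "(\<lambda>s. HJ (\<omega>,s) - SJ m (\<omega>,s)) \<in> borel_measurable lborel" using sec[OF _ \<omega>] by measurable
    have sqi: "integrable lborel (\<lambda>s. (HJ (\<omega>,s) - SJ m (\<omega>,s))\<^sup>2)"
      by (rule integrableI_nonneg) (use gm fin in \<open>auto simp: e_def\<close>)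
    have bnd: "\<And>s. norm (HJ (\<omega>,s) - SJ m (\<omega>,s)) \<le> norm ((HJ (\<omega>,s) - SJ m (\<omega>,s))\<^sup>2 + indicator {0..t} s)"
    proof -
      fix s
      show "norm (HJ (\<omega>,s) - SJ m (\<omega>,s)) \<le> norm ((HJ (\<omega>,s) - SJ m (\<omega>,s))\<^sup>2 + indicator {0..t} s)"
      proof (cases "s \<in> {0..t}")
        case True
        then show ?thesis using abs_le_sq1 by simp
      next
        case False then show ?thesis unfolding Heq Seq by simp
      qed
    qed
    have ii: "integrable lborel (\<lambda>s. (HJ (\<omega>,s) - SJ m (\<omega>,s))\<^sup>2 + indicator {0..t} s)"
      using sqi t by (intro Bochner_Integration.integrable_add integrable_real_indicator) auto
    have gi: "integrable lborel (\<lambda>s. HJ (\<omega>,s) - SJ m (\<omega>,s))"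
      by (rule Bochner_Integration.integrable_bound[OF ii gm]) (use bnd in auto)
    have "e m \<omega> = ennreal (r m \<omega>)" unfolding e_def r_def
      by (rule nn_integral_eq_integral[OF sqi]) auto
    then show "integrable lborel (\<lambda>s. HJ (\<omega>,s) - SJ m (\<omega>,s)) \<and> integrable lborel (\<lambda>s. (HJ (\<omega>,s) - SJ m (\<omega>,s))\<^sup>2)
      \<and> e m \<omega> = ennreal (r m \<omega>)" using gi sqi by simp
  qed
  have goodAE: "\<And>m. D m < \<infinity> \<Longrightarrow> AE \<omega> in M. e m \<omega> < \<infinity>"
  proof -
    fix m assume "D m < \<infinity>"
    then have "(\<integral>\<^sup>+\<omega>. e m \<omega> \<partial>M) \<noteq> \<infinity>" unfolding D_def by simp
    from nn_integral_PInf_AE[OF em this] show "AE \<omega> in M. e m \<omega> < \<infinity>"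
      by eventually_elim (simp add: less_top)
  qed
  have evD: "eventually (\<lambda>m. D m < 1) sequentially"
    using order_tendstoD(2)[OF conv', of 1] by simp
  have r_nn: "\<And>m \<omega>. 0 \<le> r m \<omega>" unfolding r_def by simp
  have Rint: "\<And>m. D m < 1 \<Longrightarrow> integrable M (r m) \<and> (\<integral>\<omega>. r m \<omega> \<partial>M) = enn2real (D m)"
  proof -
    fix m assume D1: "D m < 1"
    then have Dfin: "D m < \<infinity>" using order.strict_trans[OF D1, of \<infinity>] by simp
    have ae: "AE \<omega> in M. e m \<omega> = ennreal (r m \<omega>)"
      using goodAE[OF Dfin] AE_space by eventually_elim (use good in auto)
    have eqD: "(\<integral>\<^sup>+\<omega>. ennreal (r m \<omega>) \<partial>M) = D m"
      unfolding D_def by (rule nn_integral_cong_AE) (use ae in auto)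
    have ri: "integrable M (r m)"
      by (rule integrableI_nonneg) (use rm r_nn eqD Dfin in auto)
    have "ennreal (\<integral>\<omega>. r m \<omega> \<partial>M) = D m"
      using nn_integral_eq_integral[OF ri] r_nn eqD by simp
    then show "integrable M (r m) \<and> (\<integral>\<omega>. r m \<omega> \<partial>M) = enn2real (D m)"
      using ri by (metis enn2real_ennreal integral_nonneg_AE AE_I2 r_nn)
  qed
  have pw: "\<And>m \<omega> \<delta>. \<omega> \<in> space M \<Longrightarrow> e m \<omega> < \<infinity> \<Longrightarrow> \<delta> > 0 \<Longrightarrow>
     integrable lborel (\<lambda>s. HJ (\<omega>,s)) \<and> \<bar>Y \<omega> - Z m \<omega>\<bar> \<le> r m \<omega> / \<delta> + \<delta> * t"
  proof -
    fix m \<omega> and \<delta> :: real assume \<omega>: "\<omega> \<in> space M" and fin: "e m \<omega> < \<infinity>" and d: "\<delta> > 0"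
    note G = good[OF \<omega> fin]
    have Si: "integrable lborel (\<lambda>s. SJ m (\<omega>,s))" using Sint unfolding Seq .
    have eqH: "\<And>s. HJ (\<omega>,s) = (HJ (\<omega>,s) - SJ m (\<omega>,s)) + SJ m (\<omega>,s)" by simp
    have Hi: "integrable lborel (\<lambda>s. HJ (\<omega>,s))"
      by (subst eqH) (intro Bochner_Integration.integrable_add G[THEN conjunct1] Si)
    have YZ: "Y \<omega> - Z m \<omega> = (\<integral>s. HJ (\<omega>,s) - SJ m (\<omega>,s) \<partial>lborel)"
      unfolding Y_def Z_def using Hi Si by simp
    have ti: "integrable lborel (indicat_real {0..t})" using t by (intro integrable_real_indicator) auto
    have bi: "integrable lborel (\<lambda>s. (HJ (\<omega>,s) - SJ m (\<omega>,s))\<^sup>2 / \<delta> + \<delta> * indicator {0..t} s)"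
      using G ti by auto
    have pt: "\<And>s. \<bar>HJ (\<omega>,s) - SJ m (\<omega>,s)\<bar> \<le> (HJ (\<omega>,s) - SJ m (\<omega>,s))\<^sup>2 / \<delta> + \<delta> * indicator {0..t} s"
    proof -
      fix s
      have "\<bar>(HJ (\<omega>,s) - SJ m (\<omega>,s)) * indicator {0..t} s\<bar> \<le> (HJ (\<omega>,s) - SJ m (\<omega>,s))\<^sup>2 / \<delta> + \<delta> * (indicator {0..t} s)\<^sup>2"
        by (rule amgm[OF d])
      moreover have "(HJ (\<omega>,s) - SJ m (\<omega>,s)) * indicator {0..t} s = HJ (\<omega>,s) - SJ m (\<omega>,s)"
        unfolding Heq Seq by (simp add: indicator_def)
      moreover have "(indicator {0..t} s :: real)\<^sup>2 = indicator {0..t} s" by (simp add: indicator_def)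
      ultimately show "?thesis s" by simp
    qed
    have "\<bar>Y \<omega> - Z m \<omega>\<bar> \<le> (\<integral>s. \<bar>HJ (\<omega>,s) - SJ m (\<omega>,s)\<bar> \<partial>lborel)"
      unfolding YZ using Bochner_Integration.integral_norm_bound[of lborel "\<lambda>s. HJ (\<omega>,s) - SJ m (\<omega>,s)"] by simp
    also have "\<dots> \<le> (\<integral>s. (HJ (\<omega>,s) - SJ m (\<omega>,s))\<^sup>2 / \<delta> + \<delta> * indicator {0..t} s \<partial>lborel)"
      by (rule integral_mono[OF _ bi]) (use G pt in auto)
    also have "\<dots> = r m \<omega> / \<delta> + \<delta> * t"
      using G ti t unfolding r_def by (simp add: measure_lborel_Icc)
    finally show "integrable lborel (\<lambda>s. HJ (\<omega>,s)) \<and> \<bar>Y \<omega> - Z m \<omega>\<bar> \<le> r m \<omega> / \<delta> + \<delta> * t"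
      using Hi by simp
  qed
  have pwAE: "\<And>m \<delta>. D m < 1 \<Longrightarrow> \<delta> > 0 \<Longrightarrow> AE \<omega> in M. integrable lborel (\<lambda>s. HJ (\<omega>,s)) \<and> \<bar>Y \<omega> - Z m \<omega>\<bar> \<le> r m \<omega> / \<delta> + \<delta> * t"
  proof -
    fix m and \<delta> :: real assume D1: "D m < 1" and d: "\<delta> > 0"
    then have Dfin: "D m < \<infinity>" using order.strict_trans[OF D1, of \<infinity>] by simp
    show "AE \<omega> in M. integrable lborel (\<lambda>s. HJ (\<omega>,s)) \<and> \<bar>Y \<omega> - Z m \<omega>\<bar> \<le> r m \<omega> / \<delta> + \<delta> * t"
      using goodAE[OF Dfin] AE_space by eventually_elim (use pw d in auto)
  qed
  obtain m0 where m0: "D m0 < 1" using evD eventually_sequentially by auto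
  have Zi: "\<And>m. integrable M (Z m)" using Zint unfolding Z_def Seq .
  have Yi: "integrable M Y"
  proof (rule Bochner_Integration.integrable_bound[OF _ Ym])
    show "integrable M (\<lambda>\<omega>. \<bar>Z m0 \<omega>\<bar> + r m0 \<omega> / 1 + 1 * t)"
      using Zi[of m0] Rint[OF m0] by auto
    show "AE \<omega> in M. norm (Y \<omega>) \<le> norm (\<bar>Z m0 \<omega>\<bar> + r m0 \<omega> / 1 + 1 * t)"
      using pwAE[OF m0 zero_less_one] by eventually_elim (use r_nn t in auto)
  qed
  then show "integrable M (\<lambda>\<omega>. \<integral>s. indicator {0..t} s * H s \<omega> \<partial>lborel)"
    unfolding Y_def Heq .
  show "AE \<omega> in M. integrable lborel (\<lambda>s. indicator {0..t} s * H s \<omega>)"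
    using pwAE[OF m0 zero_less_one] by eventually_elim (simp add: Heq)
  have "(\<lambda>m. \<integral>\<omega>. Z m \<omega> \<partial>M) \<longlonglongrightarrow> (\<integral>\<omega>. Y \<omega> \<partial>M)"
  proof (rule abstract_lim[where d="\<lambda>m. enn2real (D m)" and C=t])
    show "(\<lambda>m. enn2real (D m)) \<longlonglongrightarrow> 0" using tendsto_enn2real[of D 0] conv' by simp
    show "0 \<le> t" by fact
    show "eventually (\<lambda>m. \<forall>\<delta>>0. \<bar>(\<integral>\<omega>. Z m \<omega> \<partial>M) - (\<integral>\<omega>. Y \<omega> \<partial>M)\<bar> \<le> enn2real (D m) / \<delta> + \<delta> * t) sequentially"
      using evD
    proof eventually_elim
      case (elim m)
      show ?case
      proof (intro allI impI)
        fix \<delta> :: real assume d: "\<delta> > 0"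
        note R = Rint[OF elim]
        have "\<bar>(\<integral>\<omega>. Z m \<omega> \<partial>M) - (\<integral>\<omega>. Y \<omega> \<partial>M)\<bar> = \<bar>\<integral>\<omega>. Y \<omega> - Z m \<omega> \<partial>M\<bar>"
          using Yi Zi by simp
        also have "\<dots> \<le> (\<integral>\<omega>. \<bar>Y \<omega> - Z m \<omega>\<bar> \<partial>M)"
          using Bochner_Integration.integral_norm_bound[of M "\<lambda>\<omega>. Y \<omega> - Z m \<omega>"] by simp
        also have "\<dots> \<le> (\<integral>\<omega>. r m \<omega> / \<delta> + \<delta> * t \<partial>M)"
          by (rule integral_mono_AE) (use Yi Zi R pwAE[OF elim d] in auto)
        also have "\<dots> = enn2real (D m) / \<delta> + \<delta> * t"
          using R by (simp add: prob_space)
        finally show "\<bar>(\<integral>\<omega>. Z m \<omega> \<partial>M) - (\<integral>\<omega>. Y \<omega> \<partial>M)\<bar> \<le> enn2real (D m) / \<delta> + \<delta> * t" .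
      qed
    qed
  qed
  then show "(\<lambda>m. \<integral>\<omega>. (\<integral>s. indicator {0..t} s * S m s \<omega> \<partial>lborel) \<partial>M) \<longlonglongrightarrow> (\<integral>\<omega>. (\<integral>s. indicator {0..t} s * H s \<omega> \<partial>lborel) \<partial>M)"
    unfolding Y_def Z_def Heq Seq .
qed

lemma ito_cov:
  fixes B :: "real \<Rightarrow> 'a \<Rightarrow> real^'n" and H :: "real \<Rightarrow> 'a \<Rightarrow> real" and I :: "'a \<Rightarrow> real"
  assumes P: "prob_space M" and filt: "is_filtration M F" and bm: "brownian_motion M F B"
    and t: "0 \<le> t" and ito: "ito_integral_is M F (\<lambda>s \<omega>. B s \<omega> $ j) t H I"
  shows "integrable M (\<lambda>\<omega>. I \<omega> * B t \<omega> $ i)"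
    "i \<noteq> j \<Longrightarrow> (\<integral>\<omega>. I \<omega> * B t \<omega> $ i \<partial>M) = 0"
    "i = j \<Longrightarrow> integrable M (\<lambda>\<omega>. \<integral>s. indicator {0..t} s * H s \<omega> \<partial>lborel) \<and>
       (AE \<omega> in M. integrable lborel (\<lambda>s. indicator {0..t} s * H s \<omega>)) \<and>
       (\<integral>\<omega>. I \<omega> * B t \<omega> $ i \<partial>M) = (\<integral>\<omega>. (\<integral>s. indicator {0..t} s * H s \<omega> \<partial>lborel) \<partial>M)"
proof -
  interpret prob_space M by fact
  obtain k p \<xi> where sp: "\<And>m. simple_partition F t (k m) (p m) (\<xi> m)"
    and conv1: "(\<lambda>m. \<integral>\<^sup>+\<omega>. (\<integral>\<^sup>+s\<in>{0..t}. ennreal ((H s \<omega> - simple_proc (k m) (p m) (\<xi> m) s \<omega>)\<^sup>2) \<partial>lborel) \<partial>M) \<longlonglongrightarrow> 0"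
    and conv2: "(\<lambda>m. \<integral>\<^sup>+\<omega>. ennreal ((I \<omega> - simple_int (\<lambda>s \<omega>. B s \<omega> $ j) (k m) (p m) (\<xi> m) \<omega>)\<^sup>2) \<partial>M) \<longlonglongrightarrow> 0"
    and prog: "progressive F H" and Im: "I \<in> borel_measurable M"
    using ito unfolding ito_integral_is_def by blast
  have xim: "\<And>m l. l < k m \<Longrightarrow> \<xi> m l \<in> borel_measurable M"
    using sp filt_meas[OF filt] unfolding simple_partition_def by blast
  have xib: "\<And>m l. l < k m \<Longrightarrow> \<exists>C. \<forall>\<omega>. \<bar>\<xi> m l \<omega>\<bar> \<le> C"
    using sp unfolding simple_partition_def by blast
  have xii: "\<And>m l. l < k m \<Longrightarrow> integrable M (\<xi> m l)"
    using xim xib bdd_integrable[OF P] by blast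
  have Bm: "\<And>u. 0 \<le> u \<Longrightarrow> B u \<in> borel_measurable M" using bm_meas[OF filt bm] by blast
  have pb: "\<And>m l. l \<le> k m \<Longrightarrow> 0 \<le> p m l" using part_bounds[OF sp] by blast
  define fm where "fm = (\<lambda>m. simple_int (\<lambda>s \<omega>. B s \<omega> $ j) (k m) (p m) (\<xi> m))"
  have fmm: "\<And>m. fm m \<in> borel_measurable M"
  proof -
    fix m
    show "fm m \<in> borel_measurable M" unfolding fm_def simple_int_def
    proof (rule borel_measurable_sum)
      fix l assume "l \<in> {..<k m}"
      then have l: "l < k m" by simp
      have [measurable]: "\<xi> m l \<in> borel_measurable M" using xim[OF l] .
      have [measurable]: "B (p m l) \<in> borel_measurable M" "B (p m (Suc l)) \<in> borel_measurable M"
        using Bm pb l by auto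
      show "(\<lambda>\<omega>. \<xi> m l \<omega> * (B (p m (Suc l)) \<omega> $ j - B (p m l) \<omega> $ j)) \<in> borel_measurable M"
        by measurable
    qed
  qed
  have zm: "(\<lambda>\<omega>. B t \<omega> $ i) \<in> borel_measurable M" using Bm[OF t] by measurable
  have Zi: "integrable M (\<lambda>\<omega>. (B t \<omega> $ i)\<^sup>2)"
  proof -
    have "integrable M (\<lambda>\<omega>. (B t \<omega> - B 0 \<omega>) $ i * (B t \<omega> - B 0 \<omega>) $ i)"
      using incr_moments(3)[OF P filt bm order.refl t] .
    then show ?thesis
      by (rule Bochner_Integration.integrable_cong[THEN iffD1, rotated 2])
         (use bm in \<open>auto simp: brownian_motion_def power2_eq_square\<close>)
  qed
  have fmi: "\<And>m. integrable M (\<lambda>\<omega>. fm m \<omega> * B t \<omega> $ i)"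
    unfolding fm_def using simple_cov(1)[OF P filt bm sp] .
  have fmv: "\<And>m. (\<integral>\<omega>. fm m \<omega> * B t \<omega> $ i \<partial>M) = (if i = j then (\<Sum>l<k m. (p m (Suc l) - p m l) * (\<integral>\<omega>. \<xi> m l \<omega> \<partial>M)) else 0)"
    unfolding fm_def using simple_cov(2)[OF P filt bm sp] .
  have conv2': "(\<lambda>m. \<integral>\<^sup>+\<omega>. ennreal ((I \<omega> - fm m \<omega>)\<^sup>2) \<partial>M) \<longlonglongrightarrow> 0"
    using conv2 unfolding fm_def .
  note L = L2_lim[OF conv2' Im fmm zm fmi Zi]
  show "integrable M (\<lambda>\<omega>. I \<omega> * B t \<omega> $ i)" using L(1) .
  show "i \<noteq> j \<Longrightarrow> (\<integral>\<omega>. I \<omega> * B t \<omega> $ i \<partial>M) = 0"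
    using L(2) fmv by (simp add: LIMSEQ_const_iff)
  assume ij: "i = j"
  define S where "S = (\<lambda>m. simple_proc (k m) (p m) (\<xi> m))"
  have Hj: "(\<lambda>(\<omega>, s). indicator {0..t} s * H s \<omega>) \<in> borel_measurable (M \<Otimes>\<^sub>M lborel)"
    using prog_joint[OF filt prog t] .
  have Sj: "\<And>m. (\<lambda>(\<omega>,s). indicator {0..t} s * S m s \<omega>) \<in> borel_measurable (M \<Otimes>\<^sub>M lborel)"
  proof -
    fix m
    have "(\<lambda>x. indicator {0..t} (snd x) * (\<Sum>l<k m. indicator {p m l<..p m (Suc l)} (snd x) * \<xi> m l (fst x))) \<in> borel_measurable (M \<Otimes>\<^sub>M lborel)"
    proof (rule borel_measurable_times)
      show "(\<lambda>x. indicator {0..t} (snd x) :: real) \<in> borel_measurable (M \<Otimes>\<^sub>M lborel)" by measurable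
      show "(\<lambda>x. \<Sum>l<k m. indicator {p m l<..p m (Suc l)} (snd x) * \<xi> m l (fst x) :: real) \<in> borel_measurable (M \<Otimes>\<^sub>M lborel)"
      proof (rule borel_measurable_sum)
        fix l assume "l \<in> {..<k m}"
        then have l: "l < k m" by simp
        have [measurable]: "\<xi> m l \<in> borel_measurable M" using xim[OF l] .
        show "(\<lambda>x. indicator {p m l<..p m (Suc l)} (snd x) * \<xi> m l (fst x) :: real) \<in> borel_measurable (M \<Otimes>\<^sub>M lborel)"
          by measurable
      qed
    qed
    then show "(\<lambda>(\<omega>,s). indicator {0..t} s * S m s \<omega>) \<in> borel_measurable (M \<Otimes>\<^sub>M lborel)"
      unfolding S_def simple_proc_def by (simp add: case_prod_beta)
  qed
  have Sint: "\<And>m \<omega>. integrable lborel (\<lambda>s. indicator {0..t} s * S m s \<omega>)"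
    unfolding S_def using simple_proc_integral(1)[OF sp] .
  have Zeq: "\<And>m \<omega>. (\<integral>s. indicator {0..t} s * S m s \<omega> \<partial>lborel) = (\<Sum>l<k m. \<xi> m l \<omega> * (p m (Suc l) - p m l))"
    unfolding S_def using simple_proc_integral(2)[OF sp] .
  have Zint: "\<And>m. integrable M (\<lambda>\<omega>. \<integral>s. indicator {0..t} s * S m s \<omega> \<partial>lborel)"
    unfolding Zeq using xii by (intro Bochner_Integration.integrable_sum) auto
  have Zval: "\<And>m. (\<integral>\<omega>. (\<integral>s. indicator {0..t} s * S m s \<omega> \<partial>lborel) \<partial>M) = (\<Sum>l<k m. (p m (Suc l) - p m l) * (\<integral>\<omega>. \<xi> m l \<omega> \<partial>M))"
    unfolding Zeq using xii by (subst Bochner_Integration.integral_sum) (auto simp: mult.commute)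
  have conv1': "(\<lambda>m. \<integral>\<^sup>+\<omega>. (\<integral>\<^sup>+s\<in>{0..t}. ennreal ((H s \<omega> - S m s \<omega>)\<^sup>2) \<partial>lborel) \<partial>M) \<longlonglongrightarrow> 0"
    using conv1 unfolding S_def .
  note DS = ds_lim[OF P t Hj Sj Sint Zint conv1']
  have "(\<lambda>m. \<integral>\<omega>. fm m \<omega> * B t \<omega> $ i \<partial>M) \<longlonglongrightarrow> (\<integral>\<omega>. (\<integral>s. indicator {0..t} s * H s \<omega> \<partial>lborel) \<partial>M)"
    using DS(2) unfolding Zval fmv using ij by simp
  then have "(\<integral>\<omega>. I \<omega> * B t \<omega> $ i \<partial>M) = (\<integral>\<omega>. (\<integral>s. indicator {0..t} s * H s \<omega> \<partial>lborel) \<partial>M)"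
    using L(2) LIMSEQ_unique by blast
  then show "integrable M (\<lambda>\<omega>. \<integral>s. indicator {0..t} s * H s \<omega> \<partial>lborel) \<and>
       (AE \<omega> in M. integrable lborel (\<lambda>s. indicator {0..t} s * H s \<omega>)) \<and>
       (\<integral>\<omega>. I \<omega> * B t \<omega> $ i \<partial>M) = (\<integral>\<omega>. (\<integral>s. indicator {0..t} s * H s \<omega> \<partial>lborel) \<partial>M)"
    using DS(1,3) by simp
qed

lemma supf_meas:
  fixes K :: "(real^'n) set"
  shows "(\<lambda>\<gamma>::real^'n. SUP x\<in>K. ereal (x \<bullet> \<gamma>)) \<in> borel_measurable borel"
proof (rule borel_measurableI_greater)
  fix y :: ereal
  have "{\<gamma> \<in> space borel. y < (SUP x\<in>K. ereal (x \<bullet> \<gamma>))} = (\<Union>x\<in>K. {\<gamma>. y < ereal (x \<bullet> \<gamma>)})"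
    by (auto simp: less_SUP_iff)
  moreover have "open (\<Union>x\<in>K. {\<gamma>::real^'n. y < ereal (x \<bullet> \<gamma>)})"
  proof (rule open_UN, rule ballI)
    fix x :: "real^'n"
    show "open {\<gamma>::real^'n. y < ereal (x \<bullet> \<gamma>)}"
    proof (cases y)
      case (real r)
      have "{\<gamma>::real^'n. y < ereal (x \<bullet> \<gamma>)} = {\<gamma>. r < x \<bullet> \<gamma>}" using real by auto
      then show ?thesis by (simp add: open_halfspace_gt)
    next
      case PInf then show ?thesis by simp
    next
      case MInf then show ?thesis by simp
    qed
  qed
  ultimately show "{\<gamma> \<in> space borel. y < (SUP x\<in>K. ereal (x \<bullet> \<gamma>))} \<in> sets borel" by simp
qed

lemma e2ennreal_cmult:
  assumes c: "0 \<le> c"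
  shows "e2ennreal (ereal c * x) = ennreal c * e2ennreal x"
proof (cases x)
  case (real r)
  then show ?thesis using c by (simp add: ennreal_mult')
next
  case PInf
  then show ?thesis using c by (cases "c = 0") (auto simp: ennreal_mult_top)
next
  case MInf
  then show ?thesis using c by (cases "c = 0") (auto simp: e2ennreal_neg)
qed

lemma normal_scale:
  assumes t: "t > 0"
  shows "normal_density 0 (sqrt t) (sqrt t * z) = normal_density 0 1 z / sqrt t"
proof -
  have "sqrt (2 * pi * t) = sqrt (2 * pi) * sqrt t" by (simp add: real_sqrt_mult)
  moreover have "(sqrt t * z)\<^sup>2 / (2 * t) = z\<^sup>2 / 2" using t by (simp add: power_mult_distrib)
  ultimately show ?thesis using t unfolding normal_density_def by (simp add: field_simps)
qed

lemma gdr_scale: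
  assumes t: "t > 0"
  shows "gdr t (sqrt t *\<^sub>R y) * sqrt t ^ CARD('n) = gdr 1 (y::real^'n)"
proof -
  have "gdr t (sqrt t *\<^sub>R y) = (\<Prod>i\<in>UNIV. normal_density 0 1 (y $ i) / sqrt t)"
    unfolding gdr_def using normal_scale[OF t] by simp
  also have "\<dots> = gdr 1 y / sqrt t ^ CARD('n)"
    unfolding gdr_def by (simp add: prod_dividef)
  finally show ?thesis using t by simp
qed

lemma bt_std:
  fixes B :: "real \<Rightarrow> 'a \<Rightarrow> real^'n" and \<phi> :: "real^'n \<Rightarrow> ennreal"
  assumes bm: "brownian_motion M F B" and t: "t > 0" and phi: "\<phi> \<in> borel_measurable borel"
  shows "(\<integral>\<^sup>+\<omega>. \<phi> (B t \<omega>) \<partial>M) = (\<integral>\<^sup>+y. \<phi> (sqrt t *\<^sub>R y) \<partial>std_gauss)"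
proof -
  have D: "distributed M lborel (\<lambda>\<omega>. B t \<omega> - B 0 \<omega>) (\<lambda>x. ennreal (gdr t x))"
  proof -
    have all: "\<forall>s t. 0 \<le> s \<and> s < t \<longrightarrow> distributed M lborel (\<lambda>\<omega>. B t \<omega> - B s \<omega>) (\<lambda>x. ennreal (gdr (t - s) x))"
      using bm unfolding brownian_motion_def gauss_density_gdr by auto
    show ?thesis using spec[OF spec[OF all, of 0], of t] t by simp
  qed
  have phim[measurable]: "\<phi> \<in> borel_measurable lborel" using phi by simp
  have "(\<integral>\<^sup>+\<omega>. \<phi> (B t \<omega>) \<partial>M) = (\<integral>\<^sup>+\<omega>. \<phi> (B t \<omega> - B 0 \<omega>) \<partial>M)"
    by (rule nn_integral_cong) (use bm in \<open>auto simp: brownian_motion_def\<close>)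
  also have "\<dots> = (\<integral>\<^sup>+x. ennreal (gdr t x) * \<phi> x \<partial>lborel)"
    by (rule distributed_nn_integral[OF D phim, symmetric])
  also have "\<dots> = (\<integral>\<^sup>+x. ennreal (gdr t x) * \<phi> x \<partial>(density (distr lborel borel (\<lambda>x. 0 + sqrt t *\<^sub>R x)) (\<lambda>_. ennreal (\<bar>sqrt t\<bar> ^ DIM(real^'n)))))"
  proof -
    have L: "(lborel::(real^'n) measure) = density (distr lborel borel (\<lambda>x. 0 + sqrt t *\<^sub>R x)) (\<lambda>_. ennreal (\<bar>sqrt t\<bar> ^ DIM(real^'n)))"
      by (rule lborel_affine) (use t in simp)
    show ?thesis by (rule arg_cong[where f="\<lambda>N. nn_integral N (\<lambda>x. ennreal (gdr t x) * \<phi> x)", OF L])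
  qed
  also have "\<dots> = (\<integral>\<^sup>+y. ennreal (\<bar>sqrt t\<bar> ^ DIM(real^'n)) * (ennreal (gdr t (sqrt t *\<^sub>R y)) * \<phi> (sqrt t *\<^sub>R y)) \<partial>lborel)"
    by (subst nn_integral_density) (simp_all add: nn_integral_distr)
  also have "\<dots> = (\<integral>\<^sup>+y. ennreal (gdr 1 y) * \<phi> (sqrt t *\<^sub>R y) \<partial>lborel)"
  proof (rule nn_integral_cong)
    fix y :: "real^'n"
    have "ennreal (\<bar>sqrt t\<bar> ^ DIM(real^'n)) * ennreal (gdr t (sqrt t *\<^sub>R y)) = ennreal (gdr t (sqrt t *\<^sub>R y) * sqrt t ^ CARD('n))"
      using t gdr_nonneg by (simp add: ennreal_mult' ennreal_power mult.commute)
    then show "ennreal (\<bar>sqrt t\<bar> ^ DIM(real^'n)) * (ennreal (gdr t (sqrt t *\<^sub>R y)) * \<phi> (sqrt t *\<^sub>R y)) =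
        ennreal (gdr 1 y) * \<phi> (sqrt t *\<^sub>R y)"
      using gdr_scale[OF t, of y] by (simp add: mult.assoc[symmetric])
  qed
  also have "\<dots> = (\<integral>\<^sup>+y. \<phi> (sqrt t *\<^sub>R y) \<partial>std_gauss)"
    unfolding std_gauss_def gauss_density_gdr by (subst nn_integral_density) auto
  finally show ?thesis .
qed

lemma sup_scale:
  assumes t: "0 \<le> c"
  shows "(SUP x\<in>K. ereal (x \<bullet> (c *\<^sub>R y))) \<le> ereal c * (SUP x\<in>K. ereal (x \<bullet> (y::real^'n)))"
proof (rule SUP_least)
  fix x assume x: "x \<in> K"
  have "ereal (x \<bullet> (c *\<^sub>R y)) = ereal c * ereal (x \<bullet> y)" by simp
  also have "\<dots> \<le> ereal c * (SUP x\<in>K. ereal (x \<bullet> y))"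
    by (rule ereal_mult_left_mono) (use x t in \<open>auto intro: SUP_upper\<close>)
  finally show "ereal (x \<bullet> (c *\<^sub>R y)) \<le> ereal c * (SUP x\<in>K. ereal (x \<bullet> y))" .
qed

lemma enn2ereal_fin: "x < \<infinity> \<Longrightarrow> enn2ereal x = ereal (enn2real x)"
  by (cases x rule: ennreal_cases) auto

lemma gw_bound:
  fixes B :: "real \<Rightarrow> 'a \<Rightarrow> real^'n" and V :: "'a \<Rightarrow> real" and K :: "(real^'n) set"
  assumes P: "prob_space M" and filt: "is_filtration M F" and bm: "brownian_motion M F B" and t: "t > 0"
    and Vi: "integrable M V"
    and le: "AE \<omega> in M. ereal (V \<omega>) \<le> (SUP x\<in>K. ereal (x \<bullet> B t \<omega>))"
  shows "GW K = \<infinity> \<or> (\<exists>c. GW K = ereal c \<and> (\<integral>\<omega>. V \<omega> \<partial>M) \<le> sqrt t * c)"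
proof -
  define f where "f = (\<lambda>\<gamma>::real^'n. SUP x\<in>K. ereal (x \<bullet> \<gamma>))"
  define Pf where "Pf = (\<integral>\<^sup>+\<gamma>. e2ennreal (f \<gamma>) \<partial>std_gauss)"
  define Nf where "Nf = (\<integral>\<^sup>+\<gamma>. e2ennreal (- f \<gamma>) \<partial>std_gauss)"
  have GW: "GW K = enn2ereal Pf - enn2ereal Nf" unfolding GW_def Pf_def Nf_def f_def Let_def ..
  have fm[measurable]: "f \<in> borel_measurable borel" unfolding f_def by (rule supf_meas)
  have sg: "sets std_gauss = sets (borel :: (real^'n) measure)" unfolding std_gauss_def by simp
  have fmg1: "(\<lambda>\<gamma>. e2ennreal (f \<gamma>)) \<in> borel_measurable std_gauss"
    unfolding measurable_cong_sets[OF sg refl] by measurable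
  have fmg2: "(\<lambda>\<gamma>. e2ennreal (- f \<gamma>)) \<in> borel_measurable std_gauss"
    unfolding measurable_cong_sets[OF sg refl] by measurable
  have Bm: "B t \<in> borel_measurable M" using bm_meas[OF filt bm] t by simp
  have Vm: "V \<in> borel_measurable M" using Vi by simp
  have sc: "\<And>y. f (sqrt t *\<^sub>R y) \<le> ereal (sqrt t) * f y" unfolding f_def by (rule sup_scale) (use t in simp)
  have st: "0 \<le> sqrt t" using t by simp
  define P1 where "P1 = (\<integral>\<^sup>+\<omega>. ennreal (V \<omega>) \<partial>M)"
  define N1 where "N1 = (\<integral>\<^sup>+\<omega>. ennreal (- V \<omega>) \<partial>M)"
  have "P1 \<le> (\<integral>\<^sup>+\<omega>. e2ennreal (f (B t \<omega>)) \<partial>M)"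
  proof -
    have "AE \<omega> in M. ennreal (V \<omega>) \<le> e2ennreal (f (B t \<omega>))"
      using le unfolding f_def by eventually_elim (metis e2ennreal_ereal e2ennreal_mono)
    then show ?thesis unfolding P1_def by (rule nn_integral_mono_AE)
  qed
  also have "\<dots> = (\<integral>\<^sup>+y. e2ennreal (f (sqrt t *\<^sub>R y)) \<partial>std_gauss)"
    by (rule bt_std[OF bm t]) simp
  also have "\<dots> \<le> (\<integral>\<^sup>+y. ennreal (sqrt t) * e2ennreal (f y) \<partial>std_gauss)"
    by (rule nn_integral_mono) (use sc st in \<open>auto simp: e2ennreal_cmult[symmetric] intro: e2ennreal_mono\<close>)
  also have "\<dots> = ennreal (sqrt t) * Pf" unfolding Pf_def by (rule nn_integral_cmult[OF fmg1])
  finally have P1le: "P1 \<le> ennreal (sqrt t) * Pf" .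
  have "ennreal (sqrt t) * Nf = (\<integral>\<^sup>+y. ennreal (sqrt t) * e2ennreal (- f y) \<partial>std_gauss)"
    unfolding Nf_def by (rule nn_integral_cmult[OF fmg2, symmetric])
  also have "\<dots> \<le> (\<integral>\<^sup>+y. e2ennreal (- f (sqrt t *\<^sub>R y)) \<partial>std_gauss)"
  proof (rule nn_integral_mono)
    fix y :: "real^'n"
    have "ereal (sqrt t) * (- f y) \<le> - f (sqrt t *\<^sub>R y)" using sc[of y] by (simp add: ereal_uminus_le_reorder)
    then show "ennreal (sqrt t) * e2ennreal (- f y) \<le> e2ennreal (- f (sqrt t *\<^sub>R y))"
      using st by (simp add: e2ennreal_cmult[symmetric] e2ennreal_mono)
  qed
  also have "\<dots> = (\<integral>\<^sup>+\<omega>. e2ennreal (- f (B t \<omega>)) \<partial>M)"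
    by (rule bt_std[OF bm t, symmetric]) simp
  also have "\<dots> \<le> N1"
  proof -
    have "AE \<omega> in M. e2ennreal (- f (B t \<omega>)) \<le> ennreal (- V \<omega>)"
      using le unfolding f_def
    proof eventually_elim
      case (elim \<omega>)
      then have "- (SUP x\<in>K. ereal (x \<bullet> B t \<omega>)) \<le> ereal (- V \<omega>)"
        by (simp add: ereal_uminus_le_reorder)
      then show ?case by (metis e2ennreal_ereal e2ennreal_mono)
    qed
    then show ?thesis unfolding N1_def by (rule nn_integral_mono_AE)
  qed
  finally have N1ge: "ennreal (sqrt t) * Nf \<le> N1" .
  have P1fin: "P1 < \<infinity>" and N1fin: "N1 < \<infinity>"
  proof -
    have "(\<integral>\<^sup>+\<omega>. ennreal (norm (V \<omega>)) \<partial>M) < \<infinity>" using Vi integrable_iff_bounded by blast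
    moreover have "P1 \<le> (\<integral>\<^sup>+\<omega>. ennreal (norm (V \<omega>)) \<partial>M)" "N1 \<le> (\<integral>\<^sup>+\<omega>. ennreal (norm (V \<omega>)) \<partial>M)"
      unfolding P1_def N1_def by (auto intro!: nn_integral_mono ennreal_leI)
    ultimately show "P1 < \<infinity>" "N1 < \<infinity>" by auto
  qed
  have Vint: "(\<integral>\<omega>. V \<omega> \<partial>M) = enn2real P1 - enn2real N1"
    unfolding P1_def N1_def by (rule real_lebesgue_integral_def[OF Vi])
  have stp: "sqrt t > 0" using t by simp
  have Nfne: "Nf \<noteq> \<infinity>"
  proof
    assume "Nf = \<infinity>"
    then have "ennreal (sqrt t) * Nf = \<infinity>" using stp by (simp add: ennreal_mult_top)
    then have "N1 = \<infinity>" using N1ge by (simp add: top_unique)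
    then show False using N1fin by simp
  qed
  have Nffin: "Nf < \<infinity>" using Nfne by (simp add: less_top)
  show ?thesis
  proof (cases "Pf = \<infinity>")
    case True
    have "enn2ereal Nf = ereal (enn2real Nf)" using Nffin by (rule enn2ereal_fin)
    then show ?thesis using True GW by simp
  next
    case False
    then have Pffin: "Pf < \<infinity>" by (simp add: less_top)
    define c where "c = enn2real Pf - enn2real Nf"
    have e1: "enn2ereal Pf = ereal (enn2real Pf)" using Pffin by (rule enn2ereal_fin)
    have e2: "enn2ereal Nf = ereal (enn2real Nf)" using Nffin by (rule enn2ereal_fin)
    have "GW K = ereal c" unfolding GW e1 e2 c_def by simp
    moreover have "enn2real P1 \<le> sqrt t * enn2real Pf"
      using enn2real_mono[OF P1le] Pffin stp by (simp add: enn2real_mult ennreal_mult_less_top)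
    moreover have "sqrt t * enn2real Nf \<le> enn2real N1"
      using enn2real_mono[OF N1ge] N1fin stp by (simp add: enn2real_mult)
    ultimately show ?thesis unfolding Vint c_def by (auto simp: right_diff_distrib)
  qed
qed

lemma ynonneg:
  fixes \<Gamma> :: "real \<Rightarrow> 'a \<Rightarrow> real^'n^'n"
  assumes P: "prob_space M" and filt: "is_filtration M F" and t: "0 \<le> t"
    and prog: "\<And>i. progressive F (\<lambda>s \<omega>. \<Gamma> s \<omega> $ i $ i)"
    and tr: "\<forall>s\<ge>0. AE \<omega> in M. trace (\<Gamma> s \<omega>) \<ge> 0"
  shows "AE \<omega> in M. AE s in lborel. 0 \<le> indicator {0..t} s * trace (\<Gamma> s \<omega>)"
proof -
  interpret prob_space M by fact
  interpret pair_sigma_finite M "lborel :: real measure" by unfold_locales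
  define TJ where "TJ = (\<lambda>x::'a \<times> real. indicator {0..t} (snd x) * trace (\<Gamma> (snd x) (fst x)))"
  have TJeq: "TJ = (\<lambda>x. \<Sum>i\<in>UNIV. (\<lambda>(\<omega>,s). indicator {0..t} s * \<Gamma> s \<omega> $ i $ i) x)"
    unfolding TJ_def trace_def by (auto simp: sum_distrib_left fun_eq_iff)
  have TJm[measurable]: "TJ \<in> borel_measurable (M \<Otimes>\<^sub>M lborel)"
    unfolding TJeq by (rule borel_measurable_sum) (use prog_joint[OF filt prog t] in auto)
  define N where "N = (\<lambda>x. ennreal (- TJ x))"
  have Nm[measurable]: "N \<in> borel_measurable (M \<Otimes>\<^sub>M lborel)" unfolding N_def by measurable
  have inner0: "\<And>s. (\<integral>\<^sup>+\<omega>. N (\<omega>, s) \<partial>M) = 0"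
  proof -
    fix s :: real
    have "AE \<omega> in M. N (\<omega>, s) = 0"
    proof (cases "s \<in> {0..t}")
      case True
      then have "AE \<omega> in M. trace (\<Gamma> s \<omega>) \<ge> 0" using tr by auto
      then show ?thesis by eventually_elim (use True in \<open>simp add: N_def TJ_def ennreal_eq_0_iff\<close>)
    next
      case False then show ?thesis by (simp add: N_def TJ_def)
    qed
    then show "(\<integral>\<^sup>+\<omega>. N (\<omega>, s) \<partial>M) = 0" by (simp add: nn_integral_0_iff_AE[symmetric] nn_integral_cong_AE)
  qed
  have "(\<integral>\<^sup>+\<omega>. (\<integral>\<^sup>+s. N (\<omega>, s) \<partial>lborel) \<partial>M) = 0"
    using Fubini[OF Nm] inner0 by simp
  moreover have "(\<lambda>\<omega>. \<integral>\<^sup>+s. N (\<omega>, s) \<partial>lborel) \<in> borel_measurable M"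
    by (rule lborel.borel_measurable_nn_integral) (simp add: case_prod_beta')
  ultimately have "AE \<omega> in M. (\<integral>\<^sup>+s. N (\<omega>, s) \<partial>lborel) = 0"
    by (simp add: nn_integral_0_iff_AE)
  then show ?thesis
  proof (rule AE_mp[OF _ AE_I2], intro impI)
    fix \<omega> assume \<omega>: "\<omega> \<in> space M" and z: "(\<integral>\<^sup>+s. N (\<omega>, s) \<partial>lborel) = 0"
    have "(\<lambda>s. N (\<omega>, s)) \<in> borel_measurable lborel" using \<omega> by simp
    then have "AE s in lborel. N (\<omega>, s) = 0" using z by (simp add: nn_integral_0_iff_AE)
    then show "AE s in lborel. 0 \<le> indicator {0..t} s * trace (\<Gamma> s \<omega>)"
      by eventually_elim (simp add: N_def TJ_def ennreal_eq_0_iff)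
  qed
qed

lemma markov_strict:
  fixes Y :: "'a \<Rightarrow> real"
  assumes P: "prob_space M" and Yi: "integrable M Y" and Ynn: "AE \<omega> in M. 0 \<le> Y \<omega>"
    and a: "0 \<le> a" and al: "\<alpha> > 1" and EY: "(\<integral>\<omega>. Y \<omega> \<partial>M) \<le> a / \<alpha>"
  shows "measure M {\<omega>\<in>space M. a < Y \<omega>} < 1 / \<alpha>"
proof -
  interpret prob_space M by fact
  define A where "A = {\<omega>\<in>space M. a < Y \<omega>}"
  have Ym[measurable]: "Y \<in> borel_measurable M" using Yi by simp
  have As: "A \<in> sets M" unfolding A_def by measurable
  show ?thesis
  proof (cases "prob A = 0")
    case True then show ?thesis using al unfolding A_def by simp
  next
    case False
    define g where "g = (\<lambda>\<omega>. (Y \<omega> - a) * indicator A \<omega>)"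
    have gi: "integrable M g" unfolding g_def using Yi As
      by (intro integrable_real_mult_indicator) auto
    have gnn: "AE \<omega> in M. 0 \<le> g \<omega>" by (auto simp: g_def A_def indicator_def)
    have gpos: "(\<integral>\<omega>. g \<omega> \<partial>M) \<noteq> 0"
    proof
      assume "(\<integral>\<omega>. g \<omega> \<partial>M) = 0"
      then have "AE \<omega> in M. g \<omega> = 0" using integral_nonneg_eq_0_iff_AE[OF gi gnn] by simp
      then have "AE \<omega> in M. \<omega> \<notin> A" by eventually_elim (auto simp: g_def A_def)
      then have "emeasure M A = 0" using AE_iff_measurable[OF As] by (auto simp: A_def)
      then show False using False by (simp add: emeasure_eq_measure)
    qed
    have g0: "(\<integral>\<omega>. g \<omega> \<partial>M) > 0" using gpos integral_nonneg_AE[OF gnn] by simp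
    have ind: "integrable M (\<lambda>\<omega>. a * indicator A \<omega> :: real)"
      using As by (intro integrable_mult_right integrable_real_indicator) (auto simp: emeasure_eq_measure)
    have "(\<integral>\<omega>. g \<omega> \<partial>M) + a * prob A = (\<integral>\<omega>. g \<omega> + a * indicator A \<omega> \<partial>M)"
      using gi ind As by simp
    also have "\<dots> \<le> (\<integral>\<omega>. Y \<omega> \<partial>M)"
    proof (rule integral_mono_AE)
      show "integrable M (\<lambda>\<omega>. g \<omega> + a * indicator A \<omega>)" using gi ind by simp
      show "integrable M Y" by fact
      show "AE \<omega> in M. g \<omega> + a * indicator A \<omega> \<le> Y \<omega>"
        using Ynn by eventually_elim (auto simp: g_def indicator_def)
    qed
    finally have "a * prob A < a / \<alpha>" using g0 EY by linarith
    moreover have "a \<noteq> 0"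
    proof
      assume "a = 0"
      then show False using \<open>a * prob A < a / \<alpha>\<close> by simp
    qed
    ultimately have "prob A < 1 / \<alpha>" using a al by (simp add: field_simps)
    then show ?thesis unfolding A_def .
  qed
qed

theorem lemma3p19:
  fixes M :: "'a measure" and F :: "real \<Rightarrow> 'a measure"
    and B g :: "real \<Rightarrow> 'a \<Rightarrow> real^'n" and \<Gamma> :: "real \<Rightarrow> 'a \<Rightarrow> real^'n^'n"
    and K :: "(real^'n) set" and t \<alpha> :: real
  assumes "prob_space M"
    and "is_filtration M F"
    and "brownian_motion M F B"
    and "vec_martingale M F g"
    and "ito_sde M F g \<Gamma> B"
    and "\<forall>s\<ge>0. AE \<omega> in M. trace (\<Gamma> s \<omega>) \<ge> 0"
    and "\<forall>s\<ge>0. AE \<omega> in M. g s \<omega> \<in> K"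
    and "t > 0" and "\<alpha> > 1"
  shows "measure M {\<omega>\<in>space M. (INF s\<in>{0..t}. ereal (trace (\<Gamma> s \<omega>))) > ereal (\<alpha> / sqrt t) * GW K}
           < 1 / \<alpha>"
proof -
  note P = assms(1) and filt = assms(2) and bm = assms(3) and mart = assms(4) and sde = assms(5)
    and tr = assms(6) and inK = assms(7) and tpos = assms(8) and al = assms(9)
  interpret prob_space M by fact
  have t0: "0 \<le> t" using tpos by simp
  have "\<forall>i. \<exists>I::'n \<Rightarrow> 'a \<Rightarrow> real. (\<forall>j. ito_integral_is M F (\<lambda>s \<omega>. B s \<omega> $ j) t (\<lambda>s \<omega>. \<Gamma> s \<omega> $ i $ j) (I j)) \<and>
      (AE \<omega> in M. g t \<omega> $ i - g 0 \<omega> $ i = (\<Sum>j\<in>UNIV. I j \<omega>))"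
    using sde t0 unfolding ito_sde_def by blast
  then have "\<exists>II. \<forall>i. (\<forall>j. ito_integral_is M F (\<lambda>s \<omega>. B s \<omega> $ j) t (\<lambda>s \<omega>. \<Gamma> s \<omega> $ i $ j) (II i j)) \<and>
      (AE \<omega> in M. g t \<omega> $ i - g 0 \<omega> $ i = (\<Sum>j\<in>UNIV. II i j \<omega>))"
    by (rule choice)
  then obtain II :: "'n \<Rightarrow> 'n \<Rightarrow> 'a \<Rightarrow> real" where
    ito: "\<And>i j. ito_integral_is M F (\<lambda>s \<omega>. B s \<omega> $ j) t (\<lambda>s \<omega>. \<Gamma> s \<omega> $ i $ j) (II i j)"
    and gdec: "\<And>i. AE \<omega> in M. g t \<omega> $ i - g 0 \<omega> $ i = (\<Sum>j\<in>UNIV. II i j \<omega>)"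
    by blast
  define Yd where "Yd = (\<lambda>i \<omega>. \<integral>s. indicator {0..t} s * \<Gamma> s \<omega> $ i $ i \<partial>lborel)"
  define Y where "Y = (\<lambda>\<omega>. \<Sum>i\<in>UNIV. Yd i \<omega>)"
  have Iint: "\<And>i j. integrable M (\<lambda>\<omega>. II i j \<omega> * B t \<omega> $ i)"
    using ito_cov(1)[OF P filt bm t0 ito] .
  have Ioff: "\<And>i j. i \<noteq> j \<Longrightarrow> (\<integral>\<omega>. II i j \<omega> * B t \<omega> $ i \<partial>M) = 0"
    using ito_cov(2)[OF P filt bm t0 ito] .
  have Idiag: "\<And>i. integrable M (Yd i) \<and> (AE \<omega> in M. integrable lborel (\<lambda>s. indicator {0..t} s * \<Gamma> s \<omega> $ i $ i))
      \<and> (\<integral>\<omega>. II i i \<omega> * B t \<omega> $ i \<partial>M) = (\<integral>\<omega>. Yd i \<omega> \<partial>M)"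
    unfolding Yd_def using ito_cov(3)[OF P filt bm t0 ito] by blast
  have Yi: "integrable M Y" unfolding Y_def using Idiag by (intro Bochner_Integration.integrable_sum) auto
  have EY: "(\<integral>\<omega>. Y \<omega> \<partial>M) = (\<Sum>i\<in>UNIV. \<integral>\<omega>. Yd i \<omega> \<partial>M)"
    unfolding Y_def using Idiag by (intro Bochner_Integration.integral_sum) auto
  have g0: "\<And>i. integrable M (\<lambda>\<omega>. g 0 \<omega> $ i * B t \<omega> $ i) \<and> (\<integral>\<omega>. g 0 \<omega> $ i * B t \<omega> $ i \<partial>M) = 0"
  proof -
    fix i
    have X: "(\<lambda>\<omega>. g 0 \<omega> $ i) \<in> borel_measurable (F 0)"
      using mart unfolding vec_martingale_def by (auto intro: borel_measurable_vec_nth)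
    have Xi: "integrable M (\<lambda>\<omega>. g 0 \<omega> $ i)" using mart unfolding vec_martingale_def by auto
    have h: "(\<lambda>v::real^'n. v $ i) \<in> borel_measurable borel" by measurable
    note IP = indep_prod_int[OF P filt bm order_refl t0 X Xi h incr_moments(1)[OF P filt bm order_refl t0]]
    have eq: "\<And>\<omega>. \<omega> \<in> space M \<Longrightarrow> g 0 \<omega> $ i * B t \<omega> $ i = g 0 \<omega> $ i * (B t \<omega> - B 0 \<omega>) $ i"
      using bm unfolding brownian_motion_def by simp
    have "integrable M (\<lambda>\<omega>. g 0 \<omega> $ i * B t \<omega> $ i)"
      by (subst Bochner_Integration.integrable_cong[OF refl eq]) (assumption, rule IP(1))
    moreover have "(\<integral>\<omega>. g 0 \<omega> $ i * B t \<omega> $ i \<partial>M) = 0"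
      by (subst Bochner_Integration.integral_cong[OF refl eq], assumption, subst IP(2))
         (use incr_moments(2)[OF P filt bm order_refl t0] in simp)
    ultimately show "integrable M (\<lambda>\<omega>. g 0 \<omega> $ i * B t \<omega> $ i) \<and> (\<integral>\<omega>. g 0 \<omega> $ i * B t \<omega> $ i \<partial>M) = 0" by simp
  qed
  define W where "W = (\<lambda>\<omega>. (\<Sum>i\<in>UNIV. g 0 \<omega> $ i * B t \<omega> $ i) + (\<Sum>i\<in>UNIV. \<Sum>j\<in>UNIV. II i j \<omega> * B t \<omega> $ i))"
  have Wi: "integrable M W" unfolding W_def using g0 Iint
    by (intro Bochner_Integration.integrable_add Bochner_Integration.integrable_sum) auto
  have EW: "(\<integral>\<omega>. W \<omega> \<partial>M) = (\<integral>\<omega>. Y \<omega> \<partial>M)"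
  proof -
    have "(\<integral>\<omega>. W \<omega> \<partial>M) = (\<Sum>i\<in>UNIV. \<integral>\<omega>. g 0 \<omega> $ i * B t \<omega> $ i \<partial>M) + (\<Sum>i\<in>UNIV. \<Sum>j\<in>UNIV. \<integral>\<omega>. II i j \<omega> * B t \<omega> $ i \<partial>M)"
      unfolding W_def using g0 Iint
      by (simp add: Bochner_Integration.integral_sum Bochner_Integration.integrable_sum)
    also have "\<dots> = (\<Sum>i\<in>UNIV. \<integral>\<omega>. Yd i \<omega> \<partial>M)"
    proof -
      have inner: "\<And>i. (\<Sum>j\<in>UNIV. \<integral>\<omega>. II i j \<omega> * B t \<omega> $ i \<partial>M) = (\<integral>\<omega>. Yd i \<omega> \<partial>M)"
      proof -
        fix i
        have "(\<Sum>j\<in>UNIV. \<integral>\<omega>. II i j \<omega> * B t \<omega> $ i \<partial>M) = (\<Sum>j\<in>UNIV. if j = i then (\<integral>\<omega>. Yd i \<omega> \<partial>M) else 0)"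
        proof (rule sum.cong[OF refl])
          fix j show "(\<integral>\<omega>. II i j \<omega> * B t \<omega> $ i \<partial>M) = (if j = i then (\<integral>\<omega>. Yd i \<omega> \<partial>M) else 0)"
            by (cases "j = i") (use Ioff Idiag in auto)
        qed
        then show "?thesis i" by simp
      qed
      show ?thesis using g0 by (simp add: inner)
    qed
    also have "\<dots> = (\<integral>\<omega>. Y \<omega> \<partial>M)" unfolding EY ..
    finally show ?thesis .
  qed
  define V where "V = (\<lambda>\<omega>. g t \<omega> \<bullet> B t \<omega>)"
  have gtm: "g t \<in> borel_measurable M" using mart filt_meas[OF filt] t0 unfolding vec_martingale_def by blast
  have Btm: "B t \<in> borel_measurable M" using bm_meas[OF filt bm t0] .
  have Vm: "V \<in> borel_measurable M" unfolding V_def using gtm Btm by measurable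
  have Wm: "W \<in> borel_measurable M" using Wi by simp
  have VW: "AE \<omega> in M. V \<omega> = W \<omega>"
  proof -
    have "AE \<omega> in M. \<forall>i\<in>UNIV. g t \<omega> $ i - g 0 \<omega> $ i = (\<Sum>j\<in>UNIV. II i j \<omega>)"
      by (rule AE_finite_allI) (use gdec in auto)
    then show ?thesis
    proof eventually_elim
      case (elim \<omega>)
      then have "\<And>i. g t \<omega> $ i = g 0 \<omega> $ i + (\<Sum>j\<in>UNIV. II i j \<omega>)" by (simp add: algebra_simps)
      then show ?case unfolding V_def W_def inner_vec_def
        by (simp add: sum_distrib_right distrib_right sum.distrib)
    qed
  qed
  have Vi: "integrable M V" using integrable_cong_AE[OF Vm Wm VW] Wi by simp
  have EV: "(\<integral>\<omega>. V \<omega> \<partial>M) = (\<integral>\<omega>. Y \<omega> \<partial>M)" using integral_cong_AE[OF Vm Wm VW] EW by simp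
  have le: "AE \<omega> in M. ereal (V \<omega>) \<le> (SUP x\<in>K. ereal (x \<bullet> B t \<omega>))"
    using inK t0 by (auto elim!: eventually_mono intro: SUP_upper2 simp: V_def)
  note G = gw_bound[OF P filt bm tpos Vi le]
  define E where "E = {\<omega>\<in>space M. (INF s\<in>{0..t}. ereal (trace (\<Gamma> s \<omega>))) > ereal (\<alpha> / sqrt t) * GW K}"
  have stp: "sqrt t > 0" using tpos by simp
  have alt: "\<alpha> / sqrt t > 0" using al stp by simp
  show ?thesis
  proof (cases "GW K = \<infinity>")
    case True
    have "E = {}" unfolding E_def True using alt by auto
    then have "measure M E = 0" by simp
    then show ?thesis using al unfolding E_def by simp
  next
    case False
    then obtain c where c: "GW K = ereal c" and Vc: "(\<integral>\<omega>. V \<omega> \<partial>M) \<le> sqrt t * c" using G by blast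
    have prog: "\<And>i. progressive F (\<lambda>s \<omega>. \<Gamma> s \<omega> $ i $ i)"
      using ito unfolding ito_integral_is_def by blast
    have good: "AE \<omega> in M. (\<forall>i\<in>UNIV. integrable lborel (\<lambda>s. indicator {0..t} s * \<Gamma> s \<omega> $ i $ i)) \<and>
        (AE s in lborel. 0 \<le> indicator {0..t} s * trace (\<Gamma> s \<omega>))"
    proof -
      have "AE \<omega> in M. \<forall>i\<in>UNIV. integrable lborel (\<lambda>s. indicator {0..t} s * \<Gamma> s \<omega> $ i $ i)"
        by (rule AE_finite_allI) (use Idiag in auto)
      moreover have "AE \<omega> in M. AE s in lborel. 0 \<le> indicator {0..t} s * trace (\<Gamma> s \<omega>)"
        by (rule ynonneg[OF P filt t0 prog tr])
      ultimately show ?thesis by eventually_elim auto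
    qed
    have Ytr: "\<And>\<omega>. (\<forall>i\<in>UNIV. integrable lborel (\<lambda>s. indicator {0..t} s * \<Gamma> s \<omega> $ i $ i)) \<Longrightarrow>
        Y \<omega> = (\<integral>s. indicator {0..t} s * trace (\<Gamma> s \<omega>) \<partial>lborel)"
    proof -
      fix \<omega> assume I: "\<forall>i\<in>UNIV. integrable lborel (\<lambda>s. indicator {0..t} s * \<Gamma> s \<omega> $ i $ i)"
      have eqf: "(\<lambda>s. indicator {0..t} s * trace (\<Gamma> s \<omega>)) = (\<lambda>s. \<Sum>i\<in>UNIV. indicator {0..t} s * \<Gamma> s \<omega> $ i $ i)"
        unfolding trace_def by (simp only: sum_distrib_left)
      have "(\<integral>s. indicator {0..t} s * trace (\<Gamma> s \<omega>) \<partial>lborel) = (\<integral>s. (\<Sum>i\<in>UNIV. indicator {0..t} s * \<Gamma> s \<omega> $ i $ i) \<partial>lborel)"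
        unfolding eqf ..
      also have "\<dots> = (\<Sum>i\<in>UNIV. \<integral>s. indicator {0..t} s * \<Gamma> s \<omega> $ i $ i \<partial>lborel)"
        by (rule Bochner_Integration.integral_sum) (use I in auto)
      finally show "Y \<omega> = (\<integral>s. indicator {0..t} s * trace (\<Gamma> s \<omega>) \<partial>lborel)"
        unfolding Y_def Yd_def by simp
    qed
    have Ynn: "AE \<omega> in M. 0 \<le> Y \<omega>"
      using good by eventually_elim (simp add: Ytr integral_nonneg_AE)
    have EYV: "(\<integral>\<omega>. Y \<omega> \<partial>M) \<le> sqrt t * c" using EV Vc by simp
    have c0: "0 \<le> c"
    proof -
      have "0 \<le> (\<integral>\<omega>. Y \<omega> \<partial>M)" by (rule integral_nonneg_AE[OF Ynn])
      then have "0 \<le> sqrt t * c" using EYV by linarith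
      then show ?thesis using stp by (simp add: zero_le_mult_iff)
    qed
    define a where "a = \<alpha> * sqrt t * c"
    have a0: "0 \<le> a" unfolding a_def using al stp c0 by simp
    have aal: "a / \<alpha> = sqrt t * c" unfolding a_def using al by simp
    have Mk: "measure M {\<omega>\<in>space M. a < Y \<omega>} < 1 / \<alpha>"
      by (rule markov_strict[OF P Yi Ynn a0 al]) (simp add: aal EYV)
    have sub: "AE \<omega> in M. \<omega> \<in> E \<longrightarrow> \<omega> \<in> {\<omega>\<in>space M. a < Y \<omega>}"
      using good
    proof eventually_elim
      case (elim \<omega>)
      show ?case
      proof
        assume \<omega>E: "\<omega> \<in> E"
        define Iv where "Iv = (INF s\<in>{0..t}. ereal (trace (\<Gamma> s \<omega>)))"
        define b where "b = \<alpha> / sqrt t * c"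
        have Ivb: "ereal b < Iv" using \<omega>E unfolding E_def Iv_def b_def c by simp
        have Ivle: "\<And>s. s \<in> {0..t} \<Longrightarrow> Iv \<le> ereal (trace (\<Gamma> s \<omega>))"
          unfolding Iv_def by (rule INF_lower)
        have "Iv \<le> ereal (trace (\<Gamma> 0 \<omega>))" using Ivle t0 by simp
        then obtain r where r: "Iv = ereal r" using Ivb by (cases Iv) auto
        have rb: "b < r" using Ivb r by simp
        have rle: "\<And>s. s \<in> {0..t} \<Longrightarrow> r \<le> trace (\<Gamma> s \<omega>)" using Ivle r by simp
        have Ti: "integrable lborel (\<lambda>s. indicator {0..t} s * trace (\<Gamma> s \<omega>))"
        proof -
          have "integrable lborel (\<lambda>s. \<Sum>i\<in>UNIV. indicator {0..t} s * \<Gamma> s \<omega> $ i $ i)"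
            using elim by (intro Bochner_Integration.integrable_sum) auto
          moreover have "(\<lambda>s. indicator {0..t} s * trace (\<Gamma> s \<omega>)) = (\<lambda>s. \<Sum>i\<in>UNIV. indicator {0..t} s * \<Gamma> s \<omega> $ i $ i)"
            unfolding trace_def by (simp only: sum_distrib_left)
          ultimately show ?thesis by (simp only:)
        qed
        have ci: "integrable lborel (\<lambda>s. indicator {0..t} s * r)"
          using t0 by (intro integrable_mult_left integrable_real_indicator) auto
        have "r * t = (\<integral>s. indicator {0..t} s * r \<partial>lborel)" using t0 by (simp add: measure_lborel_Icc mult.commute)
        also have "\<dots> \<le> (\<integral>s. indicator {0..t} s * trace (\<Gamma> s \<omega>) \<partial>lborel)"
          by (rule integral_mono[OF ci Ti]) (auto simp: indicator_def rle)
        also have "\<dots> = Y \<omega>" using Ytr elim by simp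
        finally have rt: "r * t \<le> Y \<omega>" .
        have "a = b * t" unfolding a_def b_def using stp
          by (simp add: field_simps)
        also have "\<dots> < r * t" using rb tpos by simp
        finally have "a < Y \<omega>" using rt by linarith
        then show "\<omega> \<in> {\<omega>\<in>space M. a < Y \<omega>}" using \<omega>E unfolding E_def by simp
      qed
    qed
    have Ys: "{\<omega>\<in>space M. a < Y \<omega>} \<in> sets M" using Yi by measurable
    have "emeasure M E \<le> emeasure M {\<omega>\<in>space M. a < Y \<omega>}" by (rule emeasure_mono_AE[OF sub Ys])
    then have "measure M E \<le> measure M {\<omega>\<in>space M. a < Y \<omega>}"
      by (simp add: emeasure_eq_measure)
    then show ?thesis using Mk unfolding E_def by simp
  qed
qed

end
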